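(* Let $f\in\mathcal O$ have $t$-expansion $f=\sum_{n\ge0}a_nt^n$. Then for every integer $i\ge1$, $D_if=\sum_{n\ge2}b_{i,n}t^n$ with $$b_{i,n}=\sum_{r=1}^{n-1}(-1)^{i+r}\binom{n-1}{r}\Big(\sum_{\substack{i_1,\dots,i_r\ge0\\ q^{i_1}+\cdots+q^{i_r}=i}}\frac1{d_{i_1}\cdots d_{i_r}}\Big)a_{n-r}.$$
   Context: Let $q$ be a power of a prime $p$, $A=\mathbb F_q[T]$, $K_\infty=\mathbb F_q((1/T))$, $C$ the completion of an algebraic closure of $K_\infty$, $\Omega=C\setminus K_\infty$. Let $[i]=T^{q^i}-T$, $d_0=1$, $d_i=[i][i-1]^q\cdots[1]^{q^{i-1}}$; the Carlitz exponential is $e_{\mathcal C}(z)=\sum_{n\ge0}z^{q^n}/d_n$, with kernel $\bar\pi A$ where $\bar\pi$ is a fixed fundamental period; $t(z)=1/e_{\mathcal C}(\bar\pi z)$. $\mathcal O$ is the ring of $A$-periodic rigid-analytic $f:\Omega\to C$ which for $|z|_i$ large ($|z|_i=\inf_{x\in K_\infty}|z-x|$) equal a convergent series $\sum_{n\ge0}a_nt(z)^n$ (the $t$-expansion). For holomorphic $f$, $\mathcal D_nf$ is defined by $f(z+\varepsilon)=\sum_n(\mathcal D_nf)(z)\varepsilon^n$ for small $\varepsilon$, and $D_n=(-\bar\pi)^{-n}\mathcal D_n$. *)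

theory Defs
  imports "HOL-Computational_Algebra.Polynomial"
begin

text \<open>The field C is an abstract field 'c with an absolute value av :: 'c => real.
  All analytic notions (convergence, limits) are defined relative to av.\<close>

definition nonarch_abs :: "('c::field \<Rightarrow> real) \<Rightarrow> bool" where
  "nonarch_abs av \<longleftrightarrow> (\<forall>x. av x \<ge> 0) \<and> (\<forall>x. av x = 0 \<longleftrightarrow> x = 0)
     \<and> (\<forall>x y. av (x * y) = av x * av y) \<and> (\<forall>x y. av (x + y) \<le> max (av x) (av y))"

definition conv_av :: "('c::field \<Rightarrow> real) \<Rightarrow> (nat \<Rightarrow> 'c) \<Rightarrow> 'c \<Rightarrow> bool" where
  "conv_av av s L \<longleftrightarrow> (\<forall>e>0. \<exists>N. \<forall>n\<ge>N. av (s n - L) < e)"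

definition complete_av :: "('c::field \<Rightarrow> real) \<Rightarrow> bool" where
  "complete_av av \<longleftrightarrow> (\<forall>s. (\<forall>e>0. \<exists>N. \<forall>m\<ge>N. \<forall>n\<ge>N. av (s m - s n) < e)
      \<longrightarrow> (\<exists>L. conv_av av s L))"

definition lim_av :: "('c::field \<Rightarrow> real) \<Rightarrow> (nat \<Rightarrow> 'c) \<Rightarrow> 'c" where
  "lim_av av s = (THE L. conv_av av s L)"

definition sums_av :: "('c::field \<Rightarrow> real) \<Rightarrow> (nat \<Rightarrow> 'c) \<Rightarrow> 'c \<Rightarrow> bool" where
  "sums_av av c L \<longleftrightarrow> conv_av av (\<lambda>N. \<Sum>k<N. c k) L"

definition alg_closed_fld :: "'c::field itself \<Rightarrow> bool" where
  "alg_closed_fld _ \<longleftrightarrow> (\<forall>P::'c poly. degree P > 0 \<longrightarrow> (\<exists>x. poly P x = 0))"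

text \<open>F_q inside C (valid when char C = p and q is a power of p).\<close>
definition Fq :: "nat \<Rightarrow> 'c::field set" where
  "Fq q = {x. x ^ q = x}"

definition Aring :: "nat \<Rightarrow> 'c::field \<Rightarrow> 'c set" where
  "Aring q T = {\<Sum>k<n. c k * T ^ k | n c. \<forall>k. c k \<in> Fq q}"

definition Kinf :: "('c::field \<Rightarrow> real) \<Rightarrow> nat \<Rightarrow> 'c \<Rightarrow> 'c set" where
  "Kinf av q T = {x. \<exists>N c. (\<forall>k. c k \<in> Fq q) \<and> sums_av av (\<lambda>k. c k * T ^ N / T ^ k) x}"

definition algebraic_over :: "'c::field set \<Rightarrow> 'c \<Rightarrow> bool" where
  "algebraic_over K y \<longleftrightarrow> (\<exists>P::'c poly. P \<noteq> 0 \<and> (\<forall>k. coeff P k \<in> K) \<and> poly P y = 0)"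

text \<open>Standing assumptions: C is the completion of an algebraic closure of K_infinity.\<close>
definition setting :: "nat \<Rightarrow> nat \<Rightarrow> ('c::field \<Rightarrow> real) \<Rightarrow> 'c \<Rightarrow> bool" where
  "setting p q av T \<longleftrightarrow> prime p \<and> (\<exists>m\<ge>1. q = p ^ m) \<and> of_nat p = (0::'c)
     \<and> nonarch_abs av \<and> complete_av av \<and> alg_closed_fld TYPE('c) \<and> av T > 1
     \<and> (\<forall>z. \<forall>e>0. \<exists>y. algebraic_over (Kinf av q T) y \<and> av (z - y) < e)"

definition brk :: "nat \<Rightarrow> 'c::field \<Rightarrow> nat \<Rightarrow> 'c" where
  "brk q T i = T ^ (q ^ i) - T"

fun dd :: "nat \<Rightarrow> 'c::field \<Rightarrow> nat \<Rightarrow> 'c" where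
  "dd q T 0 = 1"
| "dd q T (Suc i) = brk q T (Suc i) * (dd q T i) ^ q"

definition eC :: "('c::field \<Rightarrow> real) \<Rightarrow> nat \<Rightarrow> 'c \<Rightarrow> 'c \<Rightarrow> 'c" where
  "eC av q T z = lim_av av (\<lambda>N. \<Sum>n<N. z ^ (q ^ n) / dd q T n)"

definition tfun :: "('c::field \<Rightarrow> real) \<Rightarrow> nat \<Rightarrow> 'c \<Rightarrow> 'c \<Rightarrow> 'c \<Rightarrow> 'c" where
  "tfun av q T pibar z = 1 / eC av q T (pibar * z)"

definition absi :: "('c::field \<Rightarrow> real) \<Rightarrow> nat \<Rightarrow> 'c \<Rightarrow> 'c \<Rightarrow> real" where
  "absi av q T z = Inf {av (z - x) | x. x \<in> Kinf av q T}"

definition Omega :: "('c::field \<Rightarrow> real) \<Rightarrow> nat \<Rightarrow> 'c \<Rightarrow> 'c set" where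
  "Omega av q T = UNIV - Kinf av q T"

definition local_exp :: "('c::field \<Rightarrow> real) \<Rightarrow> ('c \<Rightarrow> 'c) \<Rightarrow> 'c \<Rightarrow> (nat \<Rightarrow> 'c) \<Rightarrow> bool" where
  "local_exp av f z c \<longleftrightarrow> (\<exists>r>0. \<forall>e. av e < r \<longrightarrow> sums_av av (\<lambda>n. c n * e ^ n) (f (z + e)))"

text \<open>Membership in the ring O (with the analyticity condition rendered as local
  power-series expandability at every point of Omega).\<close>
definition in_O :: "('c::field \<Rightarrow> real) \<Rightarrow> nat \<Rightarrow> 'c \<Rightarrow> 'c \<Rightarrow> ('c \<Rightarrow> 'c) \<Rightarrow> (nat \<Rightarrow> 'c) \<Rightarrow> bool" where
  "in_O av q T pibar f a \<longleftrightarrow>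
     (\<forall>z\<in>Omega av q T. \<forall>b\<in>Aring q T. f (z + b) = f z)
   \<and> (\<forall>z\<in>Omega av q T. \<exists>c. local_exp av f z c)
   \<and> (\<exists>R. \<forall>z. absi av q T z \<ge> R \<longrightarrow>
          sums_av av (\<lambda>n. a n * tfun av q T pibar z ^ n) (f z))"

text \<open>Hasse derivatives \<D>_n f and D_n = (-pibar)^(-n) \<D>_n.\<close>
definition Dcal :: "('c::field \<Rightarrow> real) \<Rightarrow> ('c \<Rightarrow> 'c) \<Rightarrow> nat \<Rightarrow> 'c \<Rightarrow> 'c" where
  "Dcal av f n z = (THE c. local_exp av f z c) n"

definition Dop :: "('c::field \<Rightarrow> real) \<Rightarrow> 'c \<Rightarrow> ('c \<Rightarrow> 'c) \<Rightarrow> nat \<Rightarrow> 'c \<Rightarrow> 'c" where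
  "Dop av pibar f n z = Dcal av f n z / (- pibar) ^ n"

definition bcoef :: "nat \<Rightarrow> 'c::field \<Rightarrow> (nat \<Rightarrow> 'c) \<Rightarrow> nat \<Rightarrow> nat \<Rightarrow> 'c" where
  "bcoef q T a i n = (\<Sum>r=1..n-1. (-1) ^ (i + r) * of_nat ((n - 1) choose r)
      * (\<Sum>xs\<in>{xs. length xs = r \<and> sum_list (map (\<lambda>j. q ^ j) xs) = i}.
           1 / prod_list (map (dd q T) xs)) * a (n - r))"

end

theory Submission
  imports Defs "HOL-Computational_Algebra.Primes"
begin

definition nullf :: "('c::field \<Rightarrow> real) \<Rightarrow> ('i \<Rightarrow> 'c) \<Rightarrow> 'i set \<Rightarrow> bool" where
  "nullf av g I \<longleftrightarrow> (\<forall>e>0. finite {i\<in>I. e \<le> av (g i)})"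
definition hsumf :: "('c::field \<Rightarrow> real) \<Rightarrow> ('i \<Rightarrow> 'c) \<Rightarrow> 'i set \<Rightarrow> 'c \<Rightarrow> bool" where
  "hsumf av g I L \<longleftrightarrow> (\<forall>e>0. \<exists>F. finite F \<and> F \<subseteq> I \<and>
      (\<forall>G. finite G \<and> F \<subseteq> G \<and> G \<subseteq> I \<longrightarrow> av (sum g G - L) < e))"
definition hs :: "('c::field \<Rightarrow> real) \<Rightarrow> ('i \<Rightarrow> 'c) \<Rightarrow> 'i set \<Rightarrow> 'c" where
  "hs av g I = (THE L. hsumf av g I L)"

locale naf =
  fixes av :: "'c::field \<Rightarrow> real"
  assumes na: "nonarch_abs av" and cp: "complete_av av"
begin

lemma av_nonneg[simp]: "av x \<ge> 0" using na unfolding nonarch_abs_def by blast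
lemma av_eq0[simp]: "av x = 0 \<longleftrightarrow> x = 0" using na unfolding nonarch_abs_def by blast
lemma av_mult[simp]: "av (x * y) = av x * av y" using na unfolding nonarch_abs_def by blast
lemma av_add: "av (x + y) \<le> max (av x) (av y)" using na unfolding nonarch_abs_def by blast
lemma av_0[simp]: "av 0 = 0" by simp
lemma av_pos: "x \<noteq> 0 \<Longrightarrow> av x > 0" using av_nonneg[of x] av_eq0[of x] by linarith
lemma av_1[simp]: "av 1 = 1"
proof -
  have "av 1 = av 1 * av 1" using av_mult[of 1 1] by simp
  moreover have "av 1 \<noteq> 0" by simp
  ultimately show ?thesis by (metis mult_cancel_left1)
qed
lemma av_minus[simp]: "av (- x) = av x"
proof -
  have "av (-1) * av (-1) = 1" using av_mult[of "-1" "-1"] by simp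
  hence "av (-1) = 1" using av_nonneg[of "-1"]
    by (smt (verit) power2_eq_1_iff power2_eq_square)
  thus ?thesis using av_mult[of "-1" x] by simp
qed
lemma av_sym: "av (x - y) = av (y - x)" by (metis av_minus minus_diff_eq)
lemma av_power[simp]: "av (x ^ n) = av x ^ n" by (induct n) auto
lemma av_inverse[simp]: "av (inverse x) = inverse (av x)"
proof (cases "x = 0")
  case False
  have h: "av (inverse x) * av x = 1" using False by (metis av_1 av_mult left_inverse)
  have "av x \<noteq> 0" using False by simp
  thus ?thesis using h by (metis inverse_unique mult.commute) 
qed simp
lemma av_divide[simp]: "av (x / y) = av x / av y"
  by (simp add: divide_inverse)
lemma av_diff: "av (x - y) \<le> max (av x) (av y)"
  using av_add[of x "-y"] by simp
lemma av_add_lt: "av x < e \<Longrightarrow> av y < e \<Longrightarrow> av (x + y) < e"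
  using av_add[of x y] by linarith
lemma av_diff_lt: "av x < e \<Longrightarrow> av y < e \<Longrightarrow> av (x - y) < e"
  using av_diff[of x y] by linarith
lemma av_strict: assumes "av y < av x" shows "av (x + y) = av x"
proof -
  have 1: "av (x + y) \<le> av x" using av_add[of x y] assms by linarith
  have "av x \<le> max (av (x + y)) (av (-y))" using av_add[of "x+y" "-y"] by simp
  thus ?thesis using 1 assms by auto
qed
lemma av_of_nat: "av (of_nat n) \<le> 1"
proof (induct n)
  case (Suc n) thus ?case using av_add[of 1 "of_nat n"] by simp
qed simp
lemma av_sum_lt: "e > 0 \<Longrightarrow> (\<And>i. i \<in> F \<Longrightarrow> av (g i) < e) \<Longrightarrow> av (sum g F) < e"
proof (induct F rule: infinite_finite_induct)
  case (insert x F) thus ?case by (simp add: av_add_lt)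
qed auto
lemma av_sum_le: "B \<ge> 0 \<Longrightarrow> (\<And>i. i \<in> F \<Longrightarrow> av (g i) \<le> B) \<Longrightarrow> av (sum g F) \<le> B"
proof (induct F rule: infinite_finite_induct)
  case (insert x F)
  have "av (g x) \<le> B" "av (sum g F) \<le> B" using insert by auto
  thus ?case using av_add[of "g x" "sum g F"] insert(1,2) by simp
qed auto
lemma av_prod_list: "av (prod_list xs) = prod_list (map av xs)"
  by (induct xs) auto

lemma conv_unique: assumes "conv_av av s L" "conv_av av s L'" shows "L = L'"
proof (rule ccontr)
  assume ne: "L \<noteq> L'"
  define e where "e = av (L - L')"
  have e: "e > 0" using ne by (simp add: e_def av_pos)
  obtain N1 where N1: "\<forall>n\<ge>N1. av (s n - L) < e" using assms(1) e unfolding conv_av_def by blast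
  obtain N2 where N2: "\<forall>n\<ge>N2. av (s n - L') < e" using assms(2) e unfolding conv_av_def by blast
  have "av ((s (max N1 N2) - L') - (s (max N1 N2) - L)) < e"
    using N1 N2 by (intro av_diff_lt[of "s (max N1 N2) - L'" e "s (max N1 N2) - L"]) auto
  thus False by (simp add: e_def)
qed
lemma lim_av_eq: "conv_av av s L \<Longrightarrow> lim_av av s = L"
  unfolding lim_av_def using conv_unique by blast

lemma hsumfD: assumes "hsumf av g I L" "e > 0"
  shows "\<exists>F. finite F \<and> F \<subseteq> I \<and> (\<forall>G. finite G \<and> F \<subseteq> G \<and> G \<subseteq> I \<longrightarrow> av (sum g G - L) < e)"
  using assms(1)[unfolded hsumf_def, rule_format, OF assms(2)] .

lemma nullfD: assumes "nullf av g I" "e > 0" shows "finite {i \<in> I. e \<le> av (g i)}"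
  using assms(1)[unfolded nullf_def, rule_format, OF assms(2)] .

lemma hsumfE: assumes "hsumf av g I L" "e > 0"
  obtains F where "finite F" "F \<subseteq> I" "\<And>G. finite G \<Longrightarrow> F \<subseteq> G \<Longrightarrow> G \<subseteq> I \<Longrightarrow> av (sum g G - L) < e"
proof -
  obtain F where F: "finite F \<and> F \<subseteq> I \<and> (\<forall>G. finite G \<and> F \<subseteq> G \<and> G \<subseteq> I \<longrightarrow> av (sum g G - L) < e)"
    using hsumfD[OF assms] by (rule exE)
  show ?thesis
  proof (rule that)
    show "finite F" using F by simp
    show "F \<subseteq> I" using F by simp
    fix G assume "finite G" "F \<subseteq> G" "G \<subseteq> I"
    thus "av (sum g G - L) < e" using F by simp
  qed
qed

lemma hsum_unique: assumes "hsumf av g I L" "hsumf av g I L'" shows "L = L'"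
proof (rule ccontr)
  assume ne: "L \<noteq> L'"
  define e where "e = av (L - L')"
  have e: "e > 0" using ne by (simp add: e_def av_pos)
  obtain F1 where F1: "finite F1" "F1 \<subseteq> I" "\<forall>G. finite G \<and> F1 \<subseteq> G \<and> G \<subseteq> I \<longrightarrow> av (sum g G - L) < e"
    using hsumfD[OF assms(1) e] by blast
  obtain F2 where F2: "finite F2" "F2 \<subseteq> I" "\<forall>G. finite G \<and> F2 \<subseteq> G \<and> G \<subseteq> I \<longrightarrow> av (sum g G - L') < e"
    using hsumfD[OF assms(2) e] by blast
  have a: "av (sum g (F1 \<union> F2) - L) < e" using F1 F2 by auto
  have b: "av (sum g (F1 \<union> F2) - L') < e" using F1 F2 by auto
  have "av ((sum g (F1 \<union> F2) - L') - (sum g (F1 \<union> F2) - L)) < e"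
    by (rule av_diff_lt[OF b a])
  thus False by (simp add: e_def)
qed

lemma hs_eq: "hsumf av g I L \<Longrightarrow> hs av g I = L"
  unfolding hs_def using hsum_unique by blast

lemma av_sum_diff_lt:
  assumes "finite G" "F \<subseteq> G" "\<And>i. i \<in> G - F \<Longrightarrow> av (g i) < e" "e > 0"
  shows "av (sum g G - sum g F) < e"
proof -
  have "sum g G - sum g F = sum g (G - F)" using assms(1,2)
    by (metis finite_subset sum_diff)
  thus ?thesis using av_sum_lt[of e "G - F" g] assms by simp
qed

lemma null_hsum_ex: assumes "nullf av g I" shows "\<exists>L. hsumf av g I L"
proof -
  define F where "F k = {i\<in>I. 1 / real (Suc k) \<le> av (g i)}" for k
  have finF: "finite (F k)" for k using assms unfolding nullf_def F_def by auto
  have monoF: "F k \<subseteq> F m" if "k \<le> m" for k m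
  proof -
    have "1 / real (Suc m) \<le> 1 / real (Suc k)" using that by (intro divide_left_mono) auto
    thus ?thesis unfolding F_def by auto
  qed
  define s where "s k = sum g (F k)" for k
  have sd: "av (s m - s n) < 1 / real (Suc n)" if "n \<le> m" for m n
    unfolding s_def
  proof (rule av_sum_diff_lt[of "F m" "F n"])
    fix i assume "i \<in> F m - F n" thus "av (g i) < 1 / real (Suc n)" unfolding F_def by auto
  qed (use monoF[OF that] finF in auto)
  have "\<exists>L. conv_av av s L"
  proof -
    have "\<exists>N. \<forall>m\<ge>N. \<forall>n\<ge>N. av (s m - s n) < e" if e: "e > 0" for e
    proof -
      obtain N where N: "1 / real (Suc N) < e" using e
        by (metis reals_Archimedean inverse_eq_divide)
      have "av (s m - s n) < e" if "m \<ge> N" "n \<ge> N" for m n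
      proof (cases "n \<le> m")
        case True
        have "1 / real (Suc n) \<le> 1 / real (Suc N)" using that by (intro divide_left_mono) auto
        thus ?thesis using sd[OF True] N by linarith
      next
        case False
        have "1 / real (Suc m) \<le> 1 / real (Suc N)" using that by (intro divide_left_mono) auto
        thus ?thesis using sd[of m n] False N av_sym[of "s m" "s n"] by simp
      qed
      thus ?thesis by blast
    qed
    thus ?thesis using cp unfolding complete_av_def by blast
  qed
  then obtain L where L: "conv_av av s L" by blast
  have "hsumf av g I L"
    unfolding hsumf_def
  proof (intro allI impI)
    fix e :: real assume e: "e > 0"
    obtain N where N: "1 / real (Suc N) < e" using e
      by (metis reals_Archimedean inverse_eq_divide)
    obtain N2 where N2: "\<forall>n\<ge>N2. av (s n - L) < e" using L e unfolding conv_av_def by blast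
    define k where "k = max N N2"
    have "1 / real (Suc k) \<le> 1 / real (Suc N)" unfolding k_def by (intro divide_left_mono) auto
    hence k1: "1 / real (Suc k) < e" using N by linarith
    have k2: "av (s k - L) < e" using N2 k_def by simp
    show "\<exists>F. finite F \<and> F \<subseteq> I \<and> (\<forall>G. finite G \<and> F \<subseteq> G \<and> G \<subseteq> I \<longrightarrow> av (sum g G - L) < e)"
    proof (intro exI[of _ "F k"] conjI allI impI)
      show "finite (F k)" by (rule finF)
      show "F k \<subseteq> I" by (auto simp: F_def)
      fix G assume G: "finite G \<and> F k \<subseteq> G \<and> G \<subseteq> I"
      have "av (sum g G - sum g (F k)) < e"
      proof (rule av_sum_diff_lt)
        fix i assume "i \<in> G - F k"
        hence "av (g i) < 1 / real (Suc k)" using G unfolding F_def by auto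
        thus "av (g i) < e" using k1 by linarith
      qed (use G e in auto)
      hence "av ((sum g G - sum g (F k)) + (s k - L)) < e" using k2 by (intro av_add_lt[of _ e]) (auto simp: s_def)
      thus "av (sum g G - L) < e" by (simp add: s_def)
    qed
  qed
  thus ?thesis by blast
qed

lemma null_hsum: "nullf av g I \<Longrightarrow> hsumf av g I (hs av g I)"
proof -
  assume "nullf av g I"
  then obtain L where "hsumf av g I L" using null_hsum_ex by blast
  thus ?thesis using hs_eq[of g I L] by simp
qed

lemma hsum_to_sums: assumes "hsumf av c UNIV L" shows "sums_av av c L"
  unfolding sums_av_def conv_av_def
proof (intro allI impI)
  fix e :: real assume e: "e > 0"
  obtain F where F: "finite F" "F \<subseteq> UNIV" "\<forall>G. finite G \<and> F \<subseteq> G \<and> G \<subseteq> UNIV \<longrightarrow> av (sum c G - L) < e"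
    using hsumfD[OF assms e] by blast
  obtain N where N: "F \<subseteq> {..<N}" using F(1) finite_nat_iff_bounded by auto
  show "\<exists>N. \<forall>n\<ge>N. av ((\<Sum>k<n. c k) - L) < e"
  proof (intro exI[of _ N] allI impI)
    fix n assume "n \<ge> N"
    hence "F \<subseteq> {..<n}" using N by auto
    thus "av ((\<Sum>k<n. c k) - L) < e" using F(3) by simp
  qed
qed

lemma sums_null: assumes "sums_av av c L" shows "nullf av c UNIV"
  unfolding nullf_def
proof (intro allI impI)
  fix e :: real assume e: "e > 0"
  obtain N where N: "\<forall>n\<ge>N. av ((\<Sum>k<n. c k) - L) < e"
    using assms e unfolding sums_av_def conv_av_def by blast
  have "{i \<in> UNIV. e \<le> av (c i)} \<subseteq> {..<N}"
  proof
    fix n assume n0: "n \<in> {i \<in> UNIV. e \<le> av (c i)}"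
    show "n \<in> {..<N}"
    proof (rule ccontr)
    assume "n \<notin> {..<N}"
    hence n: "n \<ge> N" "e \<le> av (c n)" using n0 by auto
    have a: "av ((\<Sum>k<Suc n. c k) - L) < e" using N n(1) le_SucI by blast
    have b: "av ((\<Sum>k<n. c k) - L) < e" using N n by auto
    have "av (((\<Sum>k<Suc n. c k) - L) - ((\<Sum>k<n. c k) - L)) < e"
      by (rule av_diff_lt[OF a b])
    thus False using n by simp
  qed
  qed
  thus "finite {i \<in> UNIV. e \<le> av (c i)}" using finite_subset by blast
qed

lemma sums_hsum: assumes "sums_av av c L" shows "nullf av c UNIV" "hsumf av c UNIV L"
proof -
  show n: "nullf av c UNIV" by (rule sums_null[OF assms])
  have "sums_av av c (hs av c UNIV)" using null_hsum[OF n] by (rule hsum_to_sums)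
  hence "hs av c UNIV = L" using assms unfolding sums_av_def by (rule conv_unique)
  thus "hsumf av c UNIV L" using null_hsum[OF n] by simp
qed

lemma hsum_scale: assumes "hsumf av g I L" shows "hsumf av (\<lambda>i. c * g i) I (c * L)"
proof (cases "c = 0")
  case True thus ?thesis unfolding hsumf_def by auto
next
  case False
  have c: "av c > 0" using False av_pos by blast
  show ?thesis unfolding hsumf_def
  proof (intro allI impI)
    fix e :: real assume e: "e > 0"
    obtain F where F: "finite F" "F \<subseteq> I" "\<forall>G. finite G \<and> F \<subseteq> G \<and> G \<subseteq> I \<longrightarrow> av (sum g G - L) < e / av c"
      using hsumfD[OF assms divide_pos_pos[OF e c]] by blast
    show "\<exists>F. finite F \<and> F \<subseteq> I \<and> (\<forall>G. finite G \<and> F \<subseteq> G \<and> G \<subseteq> I \<longrightarrow> av ((\<Sum>i\<in>G. c * g i) - c * L) < e)"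
    proof (intro exI[of _ F] conjI allI impI)
      fix G assume G: "finite G \<and> F \<subseteq> G \<and> G \<subseteq> I"
      have "av (sum g G - L) < e / av c" using F G by auto
      hence "av c * av (sum g G - L) < e" using c by (simp add: field_simps)
      moreover have "(\<Sum>i\<in>G. c * g i) - c * L = c * (sum g G - L)"
        by (simp add: sum_distrib_left right_diff_distrib)
      ultimately show "av ((\<Sum>i\<in>G. c * g i) - c * L) < e" by simp
    qed (use F in auto)
  qed
qed

lemma null_scale: assumes "nullf av g I" shows "nullf av (\<lambda>i. c * g i) I"
proof (cases "c = 0")
  case True thus ?thesis unfolding nullf_def by auto
next
  case False
  have c: "av c > 0" using False av_pos by blast
  show ?thesis unfolding nullf_def
  proof (intro allI impI)
    fix e :: real assume e: "e > 0"
    have "{i \<in> I. e \<le> av (c * g i)} = {i \<in> I. e / av c \<le> av (g i)}"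
      using c by (simp add: pos_divide_le_eq[OF c] mult.commute)
    thus "finite {i \<in> I. e \<le> av (c * g i)}" using nullfD[OF assms divide_pos_pos[OF e c]] by simp
  qed
qed

lemma hsum_finite: "finite I \<Longrightarrow> hsumf av g I (sum g I)"
  unfolding hsumf_def by (intro allI impI exI[of _ I]) auto

lemma null_finite: "finite I \<Longrightarrow> nullf av g I"
  unfolding nullf_def by auto

lemma hs_finite: "finite I \<Longrightarrow> hs av g I = sum g I"
  using hs_eq hsum_finite by blast

lemma null_subset: assumes "nullf av g I" "J \<subseteq> I" shows "nullf av g J"
  unfolding nullf_def
proof (intro allI impI)
  fix e :: real assume "e > 0"
  hence "finite {i \<in> I. e \<le> av (g i)}" using nullfD[OF assms(1)] by blast
  thus "finite {i \<in> J. e \<le> av (g i)}" by (rule finite_subset[rotated]) (use assms(2) in auto)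
qed

lemma null_cong: "nullf av g I \<Longrightarrow> (\<And>i. i \<in> I \<Longrightarrow> g i = g' i) \<Longrightarrow> nullf av g' I"
  unfolding nullf_def
proof (intro allI impI)
  fix e :: real
  assume "\<forall>e>0. finite {i \<in> I. e \<le> av (g i)}" "\<And>i. i \<in> I \<Longrightarrow> g i = g' i" "e > 0"
  moreover have "{i \<in> I. e \<le> av (g' i)} = {i \<in> I. e \<le> av (g i)}" using calculation(2) by auto
  ultimately show "finite {i \<in> I. e \<le> av (g' i)}" by simp
qed

lemma hsum_cong: assumes h: "hsumf av g I L" and c: "\<And>i. i \<in> I \<Longrightarrow> g i = g' i" shows "hsumf av g' I L"
  unfolding hsumf_def
proof (intro allI impI)
  fix e :: real assume e: "e > 0"
  obtain F where F: "finite F" "F \<subseteq> I" "\<forall>G. finite G \<and> F \<subseteq> G \<and> G \<subseteq> I \<longrightarrow> av (sum g G - L) < e"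
    using hsumfD[OF h e] by blast
  show "\<exists>F. finite F \<and> F \<subseteq> I \<and> (\<forall>G. finite G \<and> F \<subseteq> G \<and> G \<subseteq> I \<longrightarrow> av (sum g' G - L) < e)"
  proof (intro exI[of _ F] conjI allI impI)
    fix G assume G: "finite G \<and> F \<subseteq> G \<and> G \<subseteq> I"
    have "sum g G = sum g' G" using G c by (intro sum.cong) auto
    thus "av (sum g' G - L) < e" using F G by auto
  qed (use F in auto)
qed

lemma hsum_add: assumes "hsumf av g I A" "hsumf av h I B" shows "hsumf av (\<lambda>i. g i + h i) I (A + B)"
  unfolding hsumf_def
proof (intro allI impI)
  fix e :: real assume e: "e > 0"
  obtain F1 where F1: "finite F1" "F1 \<subseteq> I" "\<forall>G. finite G \<and> F1 \<subseteq> G \<and> G \<subseteq> I \<longrightarrow> av (sum g G - A) < e"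
    using hsumfD[OF assms(1) e] by blast
  obtain F2 where F2: "finite F2" "F2 \<subseteq> I" "\<forall>G. finite G \<and> F2 \<subseteq> G \<and> G \<subseteq> I \<longrightarrow> av (sum h G - B) < e"
    using hsumfD[OF assms(2) e] by blast
  show "\<exists>F. finite F \<and> F \<subseteq> I \<and> (\<forall>G. finite G \<and> F \<subseteq> G \<and> G \<subseteq> I \<longrightarrow> av ((\<Sum>i\<in>G. g i + h i) - (A + B)) < e)"
  proof (intro exI[of _ "F1 \<union> F2"] conjI allI impI)
    fix G assume G: "finite G \<and> F1 \<union> F2 \<subseteq> G \<and> G \<subseteq> I"
    have a: "av (sum g G - A) < e" using F1 G by auto
    have b: "av (sum h G - B) < e" using F2 G by auto
    have "av ((sum g G - A) + (sum h G - B)) < e" by (rule av_add_lt[OF a b])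
    thus "av ((\<Sum>i\<in>G. g i + h i) - (A + B)) < e" by (simp add: sum.distrib algebra_simps)
  qed (use F1 F2 in auto)
qed

lemma hsum_le: assumes "hsumf av g I L" "B \<ge> 0" "\<And>i. i \<in> I \<Longrightarrow> av (g i) \<le> B"
  shows "av L \<le> B"
proof (rule field_le_epsilon)
  fix e :: real assume e: "e > 0"
  obtain F where F: "finite F" "F \<subseteq> I" "\<forall>G. finite G \<and> F \<subseteq> G \<and> G \<subseteq> I \<longrightarrow> av (sum g G - L) < e"
    using hsumfD[OF assms(1) e] by blast
  have 1: "av (sum g F - L) < e" using F by auto
  have 2: "av (sum g F) \<le> B" using assms(2,3) F(2) by (intro av_sum_le) auto
  have "av (sum g F + (- (sum g F - L))) \<le> max (av (sum g F)) (av (-(sum g F - L)))" by (rule av_add)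
  hence "av L \<le> max (av (sum g F)) (av (sum g F - L))" using av_sym[of L "sum g F"] by simp
  thus "av L \<le> B + e" using 1 2 e assms(2) unfolding max_def by (auto split: if_splits)
qed

lemma null_bounded: assumes "nullf av g I" shows "\<exists>M>0. \<forall>i\<in>I. av (g i) \<le> M"
proof -
  have fin: "finite {i \<in> I. 1 \<le> av (g i)}" using nullfD[OF assms] by simp
  define M where "M = Max (insert 1 ((\<lambda>i. av (g i)) ` {i \<in> I. 1 \<le> av (g i)}))"
  have "M \<ge> 1" unfolding M_def using fin by simp
  moreover have "av (g i) \<le> M" if "i \<in> I" for i
  proof (cases "1 \<le> av (g i)")
    case True thus ?thesis unfolding M_def using fin that by (intro Max_ge) auto
  next
    case False thus ?thesis using \<open>M \<ge> 1\<close> by linarith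
  qed
  ultimately show ?thesis by (intro exI[of _ M]) auto
qed

lemma hsum_lt: assumes "nullf av g I" "hsumf av g I L" "e > 0" "\<And>i. i \<in> I \<Longrightarrow> av (g i) < e"
  shows "av L < e"
proof -
  define S where "S = {i \<in> I. e / 2 \<le> av (g i)}"
  have fin: "finite S" using nullfD[OF assms(1), of "e/2"] assms(3) unfolding S_def by simp
  define B where "B = Max (insert (e/2) ((\<lambda>i. av (g i)) ` S))"
  have B: "B < e" unfolding B_def using fin assms(3,4) by (auto simp: S_def)
  have "av (g i) \<le> B" if "i \<in> I" for i
  proof (cases "i \<in> S")
    case True thus ?thesis unfolding B_def using fin by (intro Max_ge) auto
  next
    case False
    hence "av (g i) < e / 2" using that by (auto simp: S_def)
    moreover have "e / 2 \<le> B" unfolding B_def using fin by (intro Max_ge) auto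
    ultimately show ?thesis by linarith
  qed
  note bd = this
  have "e / 2 \<le> B" unfolding B_def using fin by (intro Max_ge) auto
  hence "B \<ge> 0" using assms(3) by linarith
  hence "av L \<le> B" using bd by (rule hsum_le[OF assms(2)])
  thus ?thesis using B by linarith
qed

lemma hsum_reindex: assumes "inj_on h I" "hsumf av (g \<circ> h) I L" shows "hsumf av g (h ` I) L"
  unfolding hsumf_def
proof (intro allI impI)
  fix e :: real assume e: "e > 0"
  obtain F where F: "finite F" "F \<subseteq> I" "\<forall>G. finite G \<and> F \<subseteq> G \<and> G \<subseteq> I \<longrightarrow> av (sum (g \<circ> h) G - L) < e"
    using hsumfD[OF assms(2) e] by blast
  show "\<exists>F. finite F \<and> F \<subseteq> h ` I \<and> (\<forall>G. finite G \<and> F \<subseteq> G \<and> G \<subseteq> h ` I \<longrightarrow> av (sum g G - L) < e)"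
  proof (intro exI[of _ "h ` F"] conjI allI impI)
    fix G assume G: "finite G \<and> h ` F \<subseteq> G \<and> G \<subseteq> h ` I"
    define G' where "G' = {i \<in> I. h i \<in> G}"
    have GG: "G = h ` G'" using G unfolding G'_def by auto
    have inj: "inj_on h G'" using assms(1) unfolding G'_def by (rule inj_on_subset) auto
    have fin: "finite G'" using G GG inj finite_imageD by metis
    have "F \<subseteq> G'" using G F(2) unfolding G'_def by auto
    hence "av (sum (g \<circ> h) G' - L) < e" using F fin unfolding G'_def by auto
    moreover have "sum g G = sum (g \<circ> h) G'" unfolding GG using inj by (rule sum.reindex)
    ultimately show "av (sum g G - L) < e" by simp
  qed (use F in auto)
qed

lemma null_reindex: assumes "nullf av (g \<circ> h) I" shows "nullf av g (h ` I)"
  unfolding nullf_def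
proof (intro allI impI)
  fix e :: real assume "e > 0"
  hence "finite {i \<in> I. e \<le> av (g (h i))}" using nullfD[OF assms] by simp
  moreover have "{y \<in> h ` I. e \<le> av (g y)} = h ` {i \<in> I. e \<le> av (g (h i))}" by auto
  ultimately show "finite {y \<in> h ` I. e \<le> av (g y)}" by simp
qed

lemma null_reindex_inv: assumes "inj_on h I" "nullf av g (h ` I)" shows "nullf av (g \<circ> h) I"
  unfolding nullf_def
proof (intro allI impI)
  fix e :: real assume "e > 0"
  hence "finite {y \<in> h ` I. e \<le> av (g y)}" using nullfD[OF assms(2)] by simp
  moreover have "{y \<in> h ` I. e \<le> av (g y)} = h ` {i \<in> I. e \<le> av (g (h i))}" by auto
  ultimately have "finite (h ` {i \<in> I. e \<le> av (g (h i))})" by simp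
  moreover have "inj_on h {i \<in> I. e \<le> av (g (h i))}" using assms(1) by (rule inj_on_subset) auto
  ultimately show "finite {i \<in> I. e \<le> av ((g \<circ> h) i)}" using finite_imageD by auto
qed

lemma hsum_group:
  assumes nl: "nullf av g I" and hg: "hsumf av g I L" and J: "\<pi> ` I \<subseteq> J"
  shows "nullf av (\<lambda>j. hs av g {i\<in>I. \<pi> i = j}) J \<and> hsumf av (\<lambda>j. hs av g {i\<in>I. \<pi> i = j}) J L"
proof -
  define P where "P j = {i\<in>I. \<pi> i = j}" for j
  have nP: "nullf av g (P j)" for j by (rule null_subset[OF nl]) (auto simp: P_def)
  have hP: "hsumf av g (P j) (hs av g (P j))" for j by (rule null_hsum[OF nP])
  have null: "nullf av (\<lambda>j. hs av g (P j)) J"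
    unfolding nullf_def
  proof (intro allI impI)
    fix e :: real assume e: "e > 0"
    have "{j\<in>J. e \<le> av (hs av g (P j))} \<subseteq> \<pi> ` {i\<in>I. e \<le> av (g i)}"
    proof
      fix j assume j: "j \<in> {j\<in>J. e \<le> av (hs av g (P j))}"
      show "j \<in> \<pi> ` {i\<in>I. e \<le> av (g i)}"
      proof (rule ccontr)
        assume nj: "j \<notin> \<pi> ` {i\<in>I. e \<le> av (g i)}"
        have lt: "av (g i) < e" if i: "i \<in> P j" for i
        proof (rule ccontr)
          assume "\<not> av (g i) < e"
          hence "e \<le> av (g i)" by simp
          moreover have "i \<in> I" "\<pi> i = j" using i by (auto simp: P_def)
          ultimately have "j \<in> \<pi> ` {i\<in>I. e \<le> av (g i)}" by (auto intro: rev_image_eqI)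
          thus False using nj by simp
        qed
        have "av (hs av g (P j)) < e" by (rule hsum_lt[OF nP hP e lt])
        thus False using j by simp
      qed
    qed
    moreover have "finite (\<pi> ` {i\<in>I. e \<le> av (g i)})" using nullfD[OF nl e] by simp
    ultimately show "finite {j\<in>J. e \<le> av (hs av g (P j))}" by (rule finite_subset)
  qed
  have sum: "hsumf av (\<lambda>j. hs av g (P j)) J L"
    unfolding hsumf_def
  proof (intro allI impI)
    fix e :: real assume e: "e > 0"
    obtain F0 where F0c: "finite F0 \<and> F0 \<subseteq> I \<and> (\<forall>G. finite G \<and> F0 \<subseteq> G \<and> G \<subseteq> I \<longrightarrow> av (sum g G - L) < e)"
      using hsumfD[OF hg e] by (rule exE)
    have F0: "finite F0" "F0 \<subseteq> I" "\<And>G. finite G \<Longrightarrow> F0 \<subseteq> G \<Longrightarrow> G \<subseteq> I \<Longrightarrow> av (sum g G - L) < e"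
      using F0c by auto
    have exH: "\<exists>H. finite H \<and> F0 \<inter> P j \<subseteq> H \<and> H \<subseteq> P j \<and> av (sum g H - hs av g (P j)) < e" for j
    proof -
      obtain Fj where Fjc: "finite Fj \<and> Fj \<subseteq> P j \<and> (\<forall>G. finite G \<and> Fj \<subseteq> G \<and> G \<subseteq> P j \<longrightarrow> av (sum g G - hs av g (P j)) < e)"
        using hsumfD[OF hP e] by (rule exE)
      have Fj: "finite Fj" "Fj \<subseteq> P j" "\<And>G. finite G \<Longrightarrow> Fj \<subseteq> G \<Longrightarrow> G \<subseteq> P j \<Longrightarrow> av (sum g G - hs av g (P j)) < e"
        using Fjc by auto
      have f: "finite (Fj \<union> (F0 \<inter> P j))" using Fj(1) F0(1) by simp
      have s: "Fj \<union> (F0 \<inter> P j) \<subseteq> P j" using Fj(2) by simp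
      have "av (sum g (Fj \<union> (F0 \<inter> P j)) - hs av g (P j)) < e" using Fj(3)[OF f _ s] by simp
      hence "finite (Fj \<union> (F0 \<inter> P j)) \<and> F0 \<inter> P j \<subseteq> Fj \<union> (F0 \<inter> P j) \<and> Fj \<union> (F0 \<inter> P j) \<subseteq> P j \<and> av (sum g (Fj \<union> (F0 \<inter> P j)) - hs av g (P j)) < e"
        using f s by simp
      thus ?thesis by (rule exI)
    qed
    obtain H where Hc: "\<forall>j. finite (H j) \<and> F0 \<inter> P j \<subseteq> H j \<and> H j \<subseteq> P j \<and> av (sum g (H j) - hs av g (P j)) < e"
      using choice[OF allI[OF exH]] by (rule exE)
    have H: "finite (H j) \<and> F0 \<inter> P j \<subseteq> H j \<and> H j \<subseteq> P j \<and> av (sum g (H j) - hs av g (P j)) < e" for j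
      using Hc by (rule spec)
    show "\<exists>F. finite F \<and> F \<subseteq> J \<and> (\<forall>G. finite G \<and> F \<subseteq> G \<and> G \<subseteq> J \<longrightarrow> av ((\<Sum>j\<in>G. hs av g (P j)) - L) < e)"
    proof (intro exI[of _ "\<pi> ` F0"] conjI allI impI)
      show "finite (\<pi> ` F0)" using F0(1) by simp
      show "\<pi> ` F0 \<subseteq> J" using F0(2) J by auto
      fix G assume G: "finite G \<and> \<pi> ` F0 \<subseteq> G \<and> G \<subseteq> J"
      define U where "U = (\<Union>j\<in>G. H j)"
      have finU: "finite U" using G H by (auto simp: U_def)
      have UI: "U \<subseteq> I" using H by (force simp: U_def P_def)
      have FU: "F0 \<subseteq> U"
      proof
        fix i assume i: "i \<in> F0"
        hence "\<pi> i \<in> G" using G by auto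
        moreover have "i \<in> F0 \<inter> P (\<pi> i)" using i F0(2) by (auto simp: P_def)
        hence "i \<in> H (\<pi> i)" using H by blast
        ultimately show "i \<in> U" unfolding U_def by blast
      qed
      have disj: "\<forall>j\<in>G. \<forall>k\<in>G. j \<noteq> k \<longrightarrow> H j \<inter> H k = {}"
      proof (intro ballI impI)
        fix j k assume "j \<in> G" "k \<in> G" "j \<noteq> k"
        have "H j \<subseteq> P j" "H k \<subseteq> P k" using H by auto
        thus "H j \<inter> H k = {}" using \<open>j \<noteq> k\<close> by (auto simp: P_def)
      qed
      have sU: "sum g U = (\<Sum>j\<in>G. sum g (H j))"
        unfolding U_def by (rule sum.UNION_disjoint) (use G H disj in auto)
      have a: "av (\<Sum>j\<in>G. hs av g (P j) - sum g (H j)) < e"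
      proof (rule av_sum_lt[OF e])
        fix j assume "j \<in> G"
        have "av (sum g (H j) - hs av g (P j)) < e" using H by blast
        thus "av (hs av g (P j) - sum g (H j)) < e" using av_sym by simp
      qed
      have b: "av (sum g U - L) < e" by (rule F0(3)[OF finU FU UI])
      have "(\<Sum>j\<in>G. hs av g (P j)) - L = (\<Sum>j\<in>G. hs av g (P j) - sum g (H j)) + (sum g U - L)"
        using sU by (simp add: sum_subtractf)
      thus "av ((\<Sum>j\<in>G. hs av g (P j)) - L) < e" using av_add_lt[OF a b] by (simp add: add_diff_eq)
    qed
  qed
  show ?thesis using null sum unfolding P_def by simp
qed


lemma null_prod: assumes "nullf av g I" "nullf av h J"
  shows "nullf av (\<lambda>ij. g (fst ij) * h (snd ij)) (I \<times> J)"
proof -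
  obtain Mg where Mg: "Mg > 0" "\<forall>i\<in>I. av (g i) \<le> Mg" using null_bounded[OF assms(1)] by blast
  obtain Mh where Mh: "Mh > 0" "\<forall>j\<in>J. av (h j) \<le> Mh" using null_bounded[OF assms(2)] by blast
  show ?thesis unfolding nullf_def
  proof (intro allI impI)
    fix e :: real assume e: "e > 0"
    have "{ij \<in> I \<times> J. e \<le> av (g (fst ij) * h (snd ij))} \<subseteq> {i\<in>I. e / Mh \<le> av (g i)} \<times> {j\<in>J. e / Mg \<le> av (h j)}"
    proof
      fix ij assume ij: "ij \<in> {ij \<in> I \<times> J. e \<le> av (g (fst ij) * h (snd ij))}"
      have I: "fst ij \<in> I" and J: "snd ij \<in> J" using ij by auto
      have le: "e \<le> av (g (fst ij)) * av (h (snd ij))" using ij by simp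
      have "av (g (fst ij)) * av (h (snd ij)) \<le> av (g (fst ij)) * Mh"
        using Mh(2) J by (intro mult_left_mono) auto
      hence 1: "e / Mh \<le> av (g (fst ij))" using le Mh(1) by (simp add: pos_divide_le_eq)
      have "av (g (fst ij)) * av (h (snd ij)) \<le> Mg * av (h (snd ij))"
        using Mg(2) I by (intro mult_right_mono) auto
      hence 2: "e / Mg \<le> av (h (snd ij))" using le Mg(1) by (simp add: pos_divide_le_eq mult.commute)
      show "ij \<in> {i\<in>I. e / Mh \<le> av (g i)} \<times> {j\<in>J. e / Mg \<le> av (h j)}"
        using I J 1 2 by (simp add: mem_Times_iff)
    qed
    moreover have "finite ({i\<in>I. e / Mh \<le> av (g i)} \<times> {j\<in>J. e / Mg \<le> av (h j)})"
      using nullfD[OF assms(1) divide_pos_pos[OF e Mh(1)]] nullfD[OF assms(2) divide_pos_pos[OF e Mg(1)]] by simp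
    ultimately show "finite {ij \<in> I \<times> J. e \<le> av (g (fst ij) * h (snd ij))}" by (rule finite_subset)
  qed
qed

lemma hsum_prod: assumes "nullf av g I" "nullf av h J" "hsumf av g I A" "hsumf av h J B"
  shows "hsumf av (\<lambda>ij. g (fst ij) * h (snd ij)) (I \<times> J) (A * B)"
proof -
  define \<Phi> where "\<Phi> = (\<lambda>ij. g (fst ij) * h (snd ij))"
  have n: "nullf av \<Phi> (I \<times> J)" unfolding \<Phi>_def by (rule null_prod[OF assms(1,2)])
  define L where "L = hs av \<Phi> (I \<times> J)"
  have hL: "hsumf av \<Phi> (I \<times> J) L" unfolding L_def by (rule null_hsum[OF n])
  have gr: "hsumf av (\<lambda>i. hs av \<Phi> {ij\<in>I \<times> J. fst ij = i}) I L"
    using hsum_group[OF n hL, of fst I] by auto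
  have blk: "hs av \<Phi> {ij\<in>I \<times> J. fst ij = i} = g i * B" if i: "i \<in> I" for i
  proof -
    have eq: "{ij\<in>I \<times> J. fst ij = i} = (\<lambda>j. (i, j)) ` J" using i by auto
    have "hsumf av (\<lambda>j. g i * h j) J (g i * B)" by (rule hsum_scale[OF assms(4)])
    hence "hsumf av (\<Phi> \<circ> (\<lambda>j. (i, j))) J (g i * B)" by (simp add: \<Phi>_def o_def)
    hence "hsumf av \<Phi> ((\<lambda>j. (i, j)) ` J) (g i * B)" by (intro hsum_reindex) (auto simp: inj_on_def)
    thus ?thesis unfolding eq by (rule hs_eq)
  qed
  have "hsumf av (\<lambda>i. g i * B) I L" using gr blk by (rule hsum_cong) auto
  moreover have "hsumf av (\<lambda>i. g i * B) I (A * B)"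
    using hsum_scale[OF assms(3), of B] by (simp add: mult.commute)
  ultimately have "L = A * B" by (rule hsum_unique)
  thus ?thesis using hL unfolding \<Phi>_def by simp
qed

lemma sums_cauchy: assumes "sums_av av a A" "sums_av av b B"
  shows "sums_av av (\<lambda>n. \<Sum>k\<le>n. a k * b (n - k)) (A * B)"
proof -
  define \<Phi> where "\<Phi> = (\<lambda>ij. a (fst ij) * b (snd ij))"
  have n: "nullf av \<Phi> (UNIV \<times> UNIV)" unfolding \<Phi>_def
    by (rule null_prod[OF sums_hsum(1)[OF assms(1)] sums_hsum(1)[OF assms(2)]])
  have h: "hsumf av \<Phi> (UNIV \<times> UNIV) (A * B)" unfolding \<Phi>_def
    by (rule hsum_prod[OF sums_hsum(1)[OF assms(1)] sums_hsum(1)[OF assms(2)] sums_hsum(2)[OF assms(1)] sums_hsum(2)[OF assms(2)]])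
  have gr: "hsumf av (\<lambda>n. hs av \<Phi> {ij\<in>UNIV \<times> UNIV. fst ij + snd ij = n}) UNIV (A * B)"
    using hsum_group[OF n h, of "\<lambda>ij. fst ij + snd ij" UNIV] by auto
  have blk: "hs av \<Phi> {ij\<in>UNIV \<times> UNIV. fst ij + snd ij = n} = (\<Sum>k\<le>n. a k * b (n - k))" for n
  proof -
    have eq: "{ij\<in>UNIV \<times> UNIV. fst ij + snd ij = n} = (\<lambda>k. (k, n - k)) ` {..n}"
    proof
      show "{ij\<in>UNIV \<times> UNIV. fst ij + snd ij = n} \<subseteq> (\<lambda>k. (k, n - k)) ` {..n}"
      proof
        fix ij assume ij: "ij \<in> {ij\<in>UNIV \<times> UNIV. fst ij + snd ij = n}"
        have "ij = (\<lambda>k. (k, n - k)) (fst ij)" using ij by (cases ij) auto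
        moreover have "fst ij \<in> {..n}" using ij by auto
        ultimately show "ij \<in> (\<lambda>k. (k, n - k)) ` {..n}" by (rule image_eqI)
      qed
    qed auto
    have "hs av \<Phi> {ij\<in>UNIV \<times> UNIV. fst ij + snd ij = n} = sum \<Phi> ((\<lambda>k. (k, n - k)) ` {..n})"
      unfolding eq by (rule hs_finite) simp
    also have "\<dots> = (\<Sum>k\<le>n. \<Phi> (k, n - k))" by (subst sum.reindex) (auto simp: inj_on_def)
    finally show ?thesis by (simp add: \<Phi>_def)
  qed
  have "hsumf av (\<lambda>n. \<Sum>k\<le>n. a k * b (n - k)) UNIV (A * B)" using gr blk by (rule hsum_cong)
  thus ?thesis by (rule hsum_to_sums)
qed

lemma pow_small: assumes "0 \<le> (a::real)" "a < 1" "e > 0" shows "\<exists>N. \<forall>n\<ge>N. a ^ n < e"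
proof -
  obtain N where N: "a ^ N < e" using real_arch_pow_inv[OF assms(3,2)] by blast
  have "a ^ n < e" if "n \<ge> N" for n
  proof -
    have "a ^ n \<le> a ^ N" using assms(1,2) that by (intro power_decreasing) auto
    thus ?thesis using N by linarith
  qed
  thus ?thesis by blast
qed

lemma av_one_minus: "av y < 1 \<Longrightarrow> av (1 - y) = 1"
  using av_strict[of "-y" 1] by simp

lemma sums_geom: assumes y: "av y < 1" shows "sums_av av (\<lambda>r. y ^ r) (1 / (1 - y))"
  unfolding sums_av_def conv_av_def
proof (intro allI impI)
  fix e :: real assume e: "e > 0"
  have y1: "y \<noteq> 1" using y by auto
  have a1: "av (1 - y) = 1" by (rule av_one_minus[OF y])
  have ne: "1 - y \<noteq> 0" using y1 by simp
  obtain N where N: "\<forall>n\<ge>N. av y ^ n < e" using pow_small[OF av_nonneg y e] by blast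
  have "av ((\<Sum>r<n. y ^ r) - 1 / (1 - y)) < e" if "n \<ge> N" for n
  proof -
    have "(\<Sum>r<n. y ^ r) = (1 - y ^ n) / (1 - y)" using y1 by (simp add: sum_gp_strict)
    hence "(\<Sum>r<n. y ^ r) - 1 / (1 - y) = ((1 - y ^ n) - 1) / (1 - y)" by (simp add: diff_divide_distrib)
    hence "(\<Sum>r<n. y ^ r) - 1 / (1 - y) = - (y ^ n / (1 - y))" by simp
    thus ?thesis using N that a1 by simp
  qed
  thus "\<exists>N. \<forall>n\<ge>N. av ((\<Sum>r<n. y ^ r) - 1 / (1 - y)) < e" by blast
qed

lemma sums_cong: "sums_av av f L \<Longrightarrow> (\<And>n. f n = g n) \<Longrightarrow> sums_av av g L"
proof -
  assume "sums_av av f L" "\<And>n. f n = g n"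
  moreover have "f = g" using calculation(2) by (rule ext)
  ultimately show ?thesis by simp
qed

lemma sums_negbin_Suc: assumes y: "av y < 1"
  shows "sums_av av (\<lambda>r. of_nat ((n + r) choose r) * y ^ r) (1 / (1 - y) ^ Suc n)"
proof (induct n)
  case 0 thus ?case using sums_geom[OF y] by simp
next
  case (Suc n)
  have "sums_av av (\<lambda>m. \<Sum>k\<le>m. (of_nat ((n + k) choose k) * y ^ k) * y ^ (m - k))
      (1 / (1 - y) ^ Suc n * (1 / (1 - y)))"
    by (rule sums_cauchy[OF Suc sums_geom[OF y]])
  moreover have "(\<Sum>k\<le>m. (of_nat ((n + k) choose k) * y ^ k) * y ^ (m - k)) = of_nat ((Suc n + m) choose m) * y ^ m" for m
  proof -
    have "(\<Sum>k\<le>m. (of_nat ((n + k) choose k) * y ^ k) * y ^ (m - k)) = (\<Sum>k\<le>m. of_nat ((n + k) choose k) * y ^ m)"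
    proof (rule sum.cong[OF refl])
      fix k assume "k \<in> {..m}"
      hence "y ^ k * y ^ (m - k) = y ^ m" by (simp add: power_add[symmetric])
      thus "(of_nat ((n + k) choose k) * y ^ k) * y ^ (m - k) = of_nat ((n + k) choose k) * y ^ m"
        by (simp add: mult.assoc)
    qed
    also have "\<dots> = of_nat (\<Sum>k\<le>m. (n + k) choose k) * y ^ m" by (simp add: sum_distrib_right)
    also have "\<dots> = of_nat ((Suc n + m) choose m) * y ^ m" by (simp add: sum_choose_lower)
    finally show ?thesis .
  qed
  ultimately show ?case by (simp add: sums_cong power_Suc2 field_simps)
qed

lemma sums_negbin: assumes y: "av y < 1"
  shows "sums_av av (\<lambda>r. of_nat ((n + r - 1) choose r) * y ^ r) (1 / (1 - y) ^ n)"
proof (cases n)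
  case (Suc m)
  thus ?thesis using sums_negbin_Suc[OF y, of m] by simp
next
  case 0
  have f: "(\<lambda>r. of_nat ((n + r - 1) choose r) * y ^ r) = (\<lambda>r. if r = 0 then 1 else 0)"
  proof
    fix r show "of_nat ((n + r - 1) choose r) * y ^ r = (if r = 0 then 1 else (0::'c))"
      using 0 by (cases r) (auto simp: binomial_eq_0)
  qed
  show ?thesis unfolding f sums_av_def conv_av_def
  proof (intro allI impI exI[of _ 1])
    fix e :: real and k :: nat assume "e > 0" "1 \<le> k"
    thus "av ((\<Sum>r<k. if r = 0 then 1 else (0::'c)) - 1 / (1 - y) ^ n) < e" using 0 by simp
  qed
qed

lemma hsum_lists: assumes n: "nullf av g UNIV" and h: "hsumf av g UNIV S"
  shows "nullf av (\<lambda>xs. prod_list (map g xs)) {xs. length xs = r} \<and> hsumf av (\<lambda>xs. prod_list (map g xs)) {xs. length xs = r} (S ^ r)"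
proof (induct r)
  case 0
  have e: "{xs :: 'a list. length xs = 0} = {[]}" by auto
  have "hsumf av (\<lambda>xs. prod_list (map g xs)) {[]} (sum (\<lambda>xs. prod_list (map g xs)) {[]})"
    by (rule hsum_finite) simp
  hence "hsumf av (\<lambda>xs. prod_list (map g xs)) {[]} 1" by simp
  thus ?case unfolding e using null_finite[of "{[]}"] by simp
next
  case (Suc r)
  define K where "K = {xs :: 'a list. length xs = r}"
  have nK: "nullf av (\<lambda>xs. prod_list (map g xs)) K" and hK: "hsumf av (\<lambda>xs. prod_list (map g xs)) K (S ^ r)"
    using Suc unfolding K_def by auto
  have eq: "{xs. length xs = Suc r} = (\<lambda>p. fst p # snd p) ` (UNIV \<times> K)"
  proof
    show "{xs. length xs = Suc r} \<subseteq> (\<lambda>p. fst p # snd p) ` (UNIV \<times> K)"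
    proof
      fix xs :: "'a list" assume xs: "xs \<in> {xs. length xs = Suc r}"
      then obtain y ys where yys: "xs = y # ys" by (cases xs) auto
      hence "length ys = r" using xs by simp
      hence "(y, ys) \<in> UNIV \<times> K" unfolding K_def by simp
      moreover have "xs = (\<lambda>p. fst p # snd p) (y, ys)" using yys by simp
      ultimately show "xs \<in> (\<lambda>p. fst p # snd p) ` (UNIV \<times> K)" by (rule rev_image_eqI)
    qed
  qed (auto simp: K_def)
  have inj: "inj_on (\<lambda>p. fst p # snd p) (UNIV \<times> K)" by (auto simp: inj_on_def prod_eq_iff)
  have c: "((\<lambda>xs. prod_list (map g xs)) \<circ> (\<lambda>p. fst p # snd p)) = (\<lambda>ij. g (fst ij) * prod_list (map g (snd ij)))"
    by (rule ext) simp
  have n2: "nullf av (\<lambda>ij. g (fst ij) * prod_list (map g (snd ij))) (UNIV \<times> K)"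
    by (rule null_prod[OF n nK])
  have h2: "hsumf av (\<lambda>ij. g (fst ij) * prod_list (map g (snd ij))) (UNIV \<times> K) (S * S ^ r)"
    by (rule hsum_prod[OF n nK h hK])
  have "nullf av (\<lambda>xs. prod_list (map g xs)) ((\<lambda>p. fst p # snd p) ` (UNIV \<times> K))"
    by (rule null_reindex) (use n2 c in simp)
  moreover have "hsumf av (\<lambda>xs. prod_list (map g xs)) ((\<lambda>p. fst p # snd p) ` (UNIV \<times> K)) (S * S ^ r)"
    by (rule hsum_reindex[OF inj]) (use h2 c in simp)
  ultimately show ?case unfolding eq by simp
qed

lemma hsum_fin_supp: assumes "finite F" "F \<subseteq> I" "\<And>i. i \<in> I - F \<Longrightarrow> g i = 0"
  shows "hsumf av g I (sum g F)"
  unfolding hsumf_def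
proof (intro allI impI)
  fix e :: real assume e: "e > 0"
  show "\<exists>F'. finite F' \<and> F' \<subseteq> I \<and> (\<forall>G. finite G \<and> F' \<subseteq> G \<and> G \<subseteq> I \<longrightarrow> av (sum g G - sum g F) < e)"
  proof (intro exI[of _ F] conjI allI impI)
    show "finite F" "F \<subseteq> I" using assms by auto
    fix G assume G: "finite G \<and> F \<subseteq> G \<and> G \<subseteq> I"
    have "sum g G = sum g F" using G assms(3) by (intro sum.mono_neutral_right) auto
    thus "av (sum g G - sum g F) < e" using e by simp
  qed
qed

lemma sums_diff: assumes "sums_av av c L" "sums_av av d L'"
  shows "sums_av av (\<lambda>k. c k - d k) (L - L')"
  unfolding sums_av_def conv_av_def
proof (intro allI impI)
  fix e :: real assume e: "e > 0"
  obtain N1 where N1: "\<forall>n\<ge>N1. av ((\<Sum>k<n. c k) - L) < e" using assms(1) e unfolding sums_av_def conv_av_def by blast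
  obtain N2 where N2: "\<forall>n\<ge>N2. av ((\<Sum>k<n. d k) - L') < e" using assms(2) e unfolding sums_av_def conv_av_def by blast
  have "av ((\<Sum>k<n. c k - d k) - (L - L')) < e" if "n \<ge> max N1 N2" for n
  proof -
    have a: "av ((\<Sum>k<n. c k) - L) < e" using N1 that by simp
    have b: "av ((\<Sum>k<n. d k) - L') < e" using N2 that by simp
    have "av (((\<Sum>k<n. c k) - L) - ((\<Sum>k<n. d k) - L')) < e" by (rule av_diff_lt[OF a b])
    thus ?thesis by (simp add: sum_subtractf algebra_simps)
  qed
  thus "\<exists>N. \<forall>n\<ge>N. av ((\<Sum>k<n. c k - d k) - (L - L')) < e" by blast
qed

lemma ps_zero:
  assumes small: "\<And>r. r > 0 \<Longrightarrow> \<exists>x. x \<noteq> 0 \<and> av x < r"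
    and r: "r > 0" and z: "\<And>\<epsilon>. av \<epsilon> < r \<Longrightarrow> sums_av av (\<lambda>k. e k * \<epsilon> ^ k) 0"
  shows "e k = 0"
proof (rule ccontr)
  assume "e k \<noteq> 0"
  define k0 where "k0 = (LEAST k. e k \<noteq> 0)"
  have ek0: "e k0 \<noteq> 0" unfolding k0_def by (rule LeastI[of "\<lambda>k. e k \<noteq> 0"]) fact
  have below: "e k = 0" if "k < k0" for k using not_less_Least[of k "\<lambda>k. e k \<noteq> 0"] that unfolding k0_def by blast
  obtain \<epsilon>1 where e1: "\<epsilon>1 \<noteq> 0" "av \<epsilon>1 < r" using small[OF r] by blast
  define \<rho> where "\<rho> = av \<epsilon>1"
  have \<rho>: "\<rho> > 0" "\<rho> < r" using e1 av_pos unfolding \<rho>_def by auto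
  have "nullf av (\<lambda>k. e k * \<epsilon>1 ^ k) UNIV" using sums_null[OF z[OF e1(2)]] .
  then obtain M where M: "M > 0" "\<forall>k\<in>UNIV. av (e k * \<epsilon>1 ^ k) \<le> M" using null_bounded by blast
  have Mk: "av (e k) * \<rho> ^ k \<le> M" for k using M(2) unfolding \<rho>_def by simp
  define C where "C = av (e k0)"
  have C: "C > 0" using ek0 av_pos unfolding C_def by blast
  have bound: "C \<le> M * av \<epsilon> / \<rho> ^ Suc k0" if \<epsilon>: "\<epsilon> \<noteq> 0" "av \<epsilon> \<le> \<rho>" for \<epsilon>
  proof -
    define a where "a = av \<epsilon>"
    have a: "a > 0" "a \<le> \<rho>" using \<epsilon> av_pos unfolding a_def by auto
    have hs0: "hsumf av (\<lambda>k. e k * \<epsilon> ^ k) UNIV 0" using sums_hsum(2)[OF z] \<epsilon>(2) \<rho>(2) by simp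
    define d where "d k = (if k = k0 then - (e k0 * \<epsilon> ^ k0) else 0)" for k
    have hd: "hsumf av d UNIV (sum d {k0})" by (rule hsum_fin_supp) (auto simp: d_def)
    have hsd: "hsumf av (\<lambda>k. e k * \<epsilon> ^ k + d k) UNIV (0 + sum d {k0})" by (rule hsum_add[OF hs0 hd])
    have B0: "0 \<le> M * (a / \<rho>) ^ Suc k0" using M(1) a \<rho> by simp
    have tb: "av (e k * \<epsilon> ^ k + d k) \<le> M * (a / \<rho>) ^ Suc k0" for k
    proof (cases "k \<le> k0")
      case True
      hence "e k * \<epsilon> ^ k + d k = 0" using below[of k] by (cases "k = k0") (auto simp: d_def)
      thus ?thesis using B0 by simp
    next
      case False
      hence dk: "d k = 0" by (simp add: d_def)
      have "av (e k * \<epsilon> ^ k) = (av (e k) * \<rho> ^ k) * (a / \<rho>) ^ k"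
        using \<rho> by (simp add: a_def power_divide)
      also have "\<dots> \<le> M * (a / \<rho>) ^ k" using Mk[of k] a \<rho> by (intro mult_right_mono) auto
      also have "\<dots> \<le> M * (a / \<rho>) ^ Suc k0" using False a \<rho> M(1)
        by (intro mult_left_mono power_decreasing) auto
      finally show ?thesis using dk by simp
    qed
    have "av (0 + sum d {k0}) \<le> M * (a / \<rho>) ^ Suc k0" by (rule hsum_le[OF hsd B0]) (use tb in auto)
    hence "C * a ^ k0 \<le> M * (a / \<rho>) ^ Suc k0" by (simp add: d_def C_def a_def)
    hence X: "C * a ^ k0 \<le> (M * a / \<rho> ^ Suc k0) * a ^ k0" by (simp add: power_divide field_simps)
    have "a ^ k0 > 0" using a by simp
    hence "C \<le> M * a / \<rho> ^ Suc k0" by (rule mult_right_le_imp_le[OF X])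
    thus ?thesis by (simp add: a_def)
  qed
  define r2 where "r2 = min \<rho> (C * \<rho> ^ Suc k0 / M)"
  have r2: "r2 > 0" unfolding r2_def using \<rho> C M by simp
  obtain \<epsilon> where \<epsilon>: "\<epsilon> \<noteq> 0" "av \<epsilon> < r2" using small[OF r2] by blast
  have "C \<le> M * av \<epsilon> / \<rho> ^ Suc k0" using bound[OF \<epsilon>(1)] \<epsilon>(2) unfolding r2_def by simp
  moreover have "M * av \<epsilon> / \<rho> ^ Suc k0 < C"
  proof -
    have "av \<epsilon> < C * \<rho> ^ Suc k0 / M" using \<epsilon>(2) unfolding r2_def by simp
    thus ?thesis using M(1) \<rho>(1) by (simp add: field_simps)
  qed
  ultimately show False by simp
qed

lemma local_exp_unique:
  assumes small: "\<And>r. r > 0 \<Longrightarrow> \<exists>x. x \<noteq> 0 \<and> av x < r"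
    and c: "local_exp av f z c" and d: "local_exp av f z d"
  shows "c = d"
proof -
  obtain r1 where r1: "r1 > 0" "\<forall>e. av e < r1 \<longrightarrow> sums_av av (\<lambda>n. c n * e ^ n) (f (z + e))"
    using c unfolding local_exp_def by blast
  obtain r2 where r2: "r2 > 0" "\<forall>e. av e < r2 \<longrightarrow> sums_av av (\<lambda>n. d n * e ^ n) (f (z + e))"
    using d unfolding local_exp_def by blast
  have "c k - d k = 0" for k
  proof (rule ps_zero[OF small])
    show "min r1 r2 > 0" using r1 r2 by simp
    fix \<epsilon> assume "av \<epsilon> < min r1 r2"
    hence "sums_av av (\<lambda>n. c n * \<epsilon> ^ n - d n * \<epsilon> ^ n) (f (z + \<epsilon>) - f (z + \<epsilon>))"
      using r1 r2 by (intro sums_diff) auto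
    thus "sums_av av (\<lambda>k. (c k - d k) * \<epsilon> ^ k) 0" by (simp add: left_diff_distrib)
  qed
  thus ?thesis by auto
qed

lemma prod_av_le: assumes "\<And>x. av (g x) \<le> (1/2) ^ Suc x"
  shows "av (prod_list (map g xs)) \<le> (1/2) ^ sum_list (map Suc xs)"
proof (induct xs)
  case (Cons x xs)
  have "av (prod_list (map g (x # xs))) = av (g x) * av (prod_list (map g xs))" by simp
  also have "\<dots> \<le> (1/2) ^ Suc x * (1/2) ^ sum_list (map Suc xs)"
    using assms[of x] Cons by (intro mult_mono) auto
  also have "\<dots> = (1/2) ^ sum_list (map Suc (x # xs))" by (simp add: power_add)
  finally show ?case .
qed simp

lemma len_le_sumSuc: "length xs \<le> sum_list (map Suc xs)"
  by (induct xs) auto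

lemma mem_le_sumSuc: "x \<in> set xs \<Longrightarrow> Suc x \<le> sum_list (map Suc xs)"
  by (induct xs) auto

lemma null_tot:
  assumes nA: "nullf av A UNIV" and g: "\<And>x. av (g x) \<le> (1/2) ^ Suc x" and C: "\<And>ij. av (C ij) \<le> 1"
  shows "nullf av (\<lambda>ij. A (fst ij) * C ij * prod_list (map g (snd ij))) UNIV"
  unfolding nullf_def
proof (intro allI impI)
  fix e :: real assume e: "e > 0"
  obtain M where M: "M > 0" "\<forall>n\<in>UNIV. av (A n) \<le> M" using null_bounded[OF nA] by blast
  obtain K where K: "\<forall>n\<ge>K. (1/2 :: real) ^ n < e / M" using pow_small[of "1/2" "e / M"] e M(1) by auto
  have sub: "{ij \<in> UNIV. e \<le> av (A (fst ij) * C ij * prod_list (map g (snd ij)))}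
     \<subseteq> {n. e \<le> av (A n)} \<times> {xs. set xs \<subseteq> {..K} \<and> length xs \<le> K}"
  proof
    fix ij assume ij: "ij \<in> {ij \<in> UNIV. e \<le> av (A (fst ij) * C ij * prod_list (map g (snd ij)))}"
    define s where "s = sum_list (map Suc (snd ij))"
    define P where "P = av (prod_list (map g (snd ij)))"
    have P: "P \<le> (1/2) ^ s" "P \<ge> 0" unfolding P_def s_def using prod_av_le[OF g] by auto
    have "(1/2::real) ^ s \<le> 1" by (rule power_le_one) auto
    hence P1: "P \<le> 1" using P(1) by linarith
    have le: "e \<le> av (A (fst ij)) * av (C ij) * P" using ij unfolding P_def by simp
    have "av (A (fst ij)) * av (C ij) * P \<le> av (A (fst ij)) * 1 * 1"
      using C[of ij] P1 P(2) by (intro mult_mono) auto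
    hence 1: "e \<le> av (A (fst ij))" using le by simp
    have "av (A (fst ij)) * av (C ij) * P \<le> M * 1 * (1/2) ^ s"
      using C[of ij] P M by (intro mult_mono) auto
    hence le2: "e \<le> M * (1/2) ^ s" using le by simp
    have sK: "s < K"
    proof (rule ccontr)
      assume "\<not> s < K"
      hence "(1/2 :: real) ^ s < e / M" using K by simp
      hence "M * (1/2) ^ s < e" using M(1) by (simp add: field_simps)
      thus False using le2 by simp
    qed
    have 2: "length (snd ij) \<le> K" using len_le_sumSuc[of "snd ij"] sK unfolding s_def by simp
    have 3: "set (snd ij) \<subseteq> {..K}" using mem_le_sumSuc[of _ "snd ij"] sK unfolding s_def by fastforce
    show "ij \<in> {n. e \<le> av (A n)} \<times> {xs. set xs \<subseteq> {..K} \<and> length xs \<le> K}"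
      using 1 2 3 by (simp add: mem_Times_iff)
  qed
  have "finite {n. e \<le> av (A n)}" using nullfD[OF nA e] by simp
  moreover have "finite {xs. set xs \<subseteq> {..K} \<and> length xs \<le> K}" by (rule finite_lists_length_le) simp
  ultimately show "finite {ij \<in> UNIV. e \<le> av (A (fst ij) * C ij * prod_list (map g (snd ij)))}"
    using sub finite_subset by blast
qed

end

locale carl = naf av for av :: "'c::field \<Rightarrow> real" +
  fixes q :: nat and T :: 'c
  assumes q2: "q \<ge> 2" and T1: "av T > 1" and frob: "\<And>x y::'c. (x + y) ^ q = x ^ q + y ^ q"
begin

lemma frob_pow: "((x::'c) + y) ^ (q ^ n) = x ^ (q ^ n) + y ^ (q ^ n)"
proof (induct n)
  case (Suc n)
  have qs: "q ^ Suc n = q ^ n * q" by simp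
  have "(x + y) ^ (q ^ Suc n) = ((x + y) ^ (q ^ n)) ^ q" unfolding qs by (rule power_mult)
  also have "\<dots> = (x ^ (q ^ n)) ^ q + (y ^ (q ^ n)) ^ q" using Suc frob[of "x ^ (q ^ n)" "y ^ (q ^ n)"] by simp
  also have "\<dots> = x ^ (q ^ Suc n) + y ^ (q ^ Suc n)" unfolding qs by (simp only: power_mult)
  finally show ?case .
qed simp

lemma av_brk: assumes "i \<ge> 1" shows "av (brk q T i) = av T ^ (q ^ i)"
proof -
  have "1 < q ^ i" using q2 assms by (metis one_less_power less_le_trans one_less_numeral_iff semiring_norm(76) not_one_le_zero neq0_conv Suc_le_eq numeral_2_eq_2 Suc_1)
  hence "av T ^ 1 < av T ^ (q ^ i)" using T1 by (intro power_strict_increasing) auto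
  hence "av (-T) < av (T ^ (q ^ i))" by simp
  hence "av (T ^ (q ^ i) + (-T)) = av (T ^ (q ^ i))" by (rule av_strict)
  thus ?thesis by (simp add: brk_def)
qed

lemma av_dd: "av (dd q T n) = av T ^ (n * q ^ n)"
proof (induct n)
  case (Suc n)
  have "av (dd q T (Suc n)) = av T ^ (q ^ Suc n) * (av T ^ (n * q ^ n)) ^ q"
    using Suc av_brk[of "Suc n"] by simp
  also have "\<dots> = av T ^ (q ^ Suc n + n * q ^ n * q)" by (simp add: power_add power_mult)
  also have "q ^ Suc n + n * q ^ n * q = Suc n * q ^ Suc n" by (simp add: algebra_simps)
  finally show ?case .
qed simp

lemma av_dd_ge1: "av (dd q T n) \<ge> 1"
  unfolding av_dd using T1 by (intro one_le_power) auto

lemma dd_nz: "dd q T n \<noteq> 0"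
  using av_dd_ge1[of n] by (metis av_0 not_one_le_zero)

definition eterm :: "'c \<Rightarrow> nat \<Rightarrow> 'c" where "eterm x n = x ^ (q ^ n) / dd q T n"

lemma n_le_qpow: "n < q ^ n"
proof -
  have "n < 2 ^ n" by (rule less_exp)
  also have "2 ^ n \<le> q ^ n" using q2 by (rule power_mono) simp
  finally show ?thesis .
qed

lemma eterm_null: "nullf av (eterm x) UNIV"
  unfolding nullf_def
proof (intro allI impI)
  fix e :: real assume e: "e > 0"
  obtain N1 where N1: "2 * av x < av T ^ N1" using real_arch_pow[OF T1] by blast
  obtain N2 where N2: "\<forall>n\<ge>N2. (1/2 :: real) ^ n < e" using pow_small[of "1/2" e] e by auto
  have "{i \<in> UNIV. e \<le> av (eterm x i)} \<subseteq> {..<max N1 N2}"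
  proof
    fix n assume n: "n \<in> {i \<in> UNIV. e \<le> av (eterm x i)}"
    show "n \<in> {..<max N1 N2}"
    proof (rule ccontr)
      assume "n \<notin> {..<max N1 N2}"
      hence nN: "n \<ge> N1" "n \<ge> N2" by auto
      have Tn: "av T ^ N1 \<le> av T ^ n" using T1 nN by (intro power_increasing) auto
      have Tpos: "av T ^ n > 0" using T1 by simp
      define \<rho> where "\<rho> = av x / av T ^ n"
      have \<rho>0: "\<rho> \<ge> 0" unfolding \<rho>_def using Tpos by simp
      have \<rho>1: "\<rho> \<le> 1/2" unfolding \<rho>_def using N1 Tn Tpos by (simp add: divide_le_eq)
      have "av (eterm x n) = \<rho> ^ (q ^ n)"
        unfolding eterm_def \<rho>_def av_divide av_power av_dd by (simp add: power_divide power_mult)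
      also have "\<dots> \<le> (1/2) ^ (q ^ n)" using \<rho>0 \<rho>1 by (intro power_mono) auto
      also have "\<dots> \<le> (1/2) ^ n" using n_le_qpow[of n] by (intro power_decreasing) auto
      also have "\<dots> < e" using N2 nN by auto
      finally show False using n by simp
    qed
  qed
  thus "finite {i \<in> UNIV. e \<le> av (eterm x i)}" by (rule finite_subset) simp
qed

lemma eC_hs: "eC av q T x = hs av (eterm x) UNIV"
proof -
  have "sums_av av (eterm x) (hs av (eterm x) UNIV)"
    by (rule hsum_to_sums[OF null_hsum[OF eterm_null]])
  thus ?thesis unfolding eC_def sums_av_def eterm_def by (rule lim_av_eq)
qed

lemma eC_hsum: "hsumf av (eterm x) UNIV (eC av q T x)"
  unfolding eC_hs by (rule null_hsum[OF eterm_null])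

lemma eC_add: "eC av q T (x + y) = eC av q T x + eC av q T y"
proof -
  have "hsumf av (\<lambda>n. eterm x n + eterm y n) UNIV (eC av q T x + eC av q T y)"
    by (rule hsum_add[OF eC_hsum eC_hsum])
  moreover have "(\<lambda>n. eterm x n + eterm y n) = eterm (x + y)"
    by (rule ext) (simp add: eterm_def frob_pow add_divide_distrib)
  ultimately have "hsumf av (eterm (x + y)) UNIV (eC av q T x + eC av q T y)" by simp
  thus ?thesis using eC_hsum hsum_unique by blast
qed

lemma pl_scale: "prod_list (map (\<lambda>x. h x * (\<epsilon>::'c) ^ (q ^ x)) xs) = prod_list (map h xs) * \<epsilon> ^ (sum_list (map (\<lambda>x. q ^ x) xs))"
  by (induct xs) (auto simp: power_add mult_ac)

lemma pl_h: "prod_list (map (\<lambda>x. (c::'c) * b ^ (q ^ x) / dd q T x) xs)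
   = c ^ length xs * b ^ (sum_list (map (\<lambda>x. q ^ x) xs)) / prod_list (map (dd q T) xs)"
  by (induct xs) (auto simp: power_add mult_ac times_divide_times_eq)

lemma qpow_le_sum: "x \<in> set xs \<Longrightarrow> q ^ x \<le> sum_list (map (\<lambda>x. q ^ x) xs)"
  by (induct xs) auto

lemma finite_Y: "finite {xs. length xs \<le> m \<and> sum_list (map (\<lambda>x. q ^ x) xs) = i}"
proof (rule finite_subset)
  show "{xs. length xs \<le> m \<and> sum_list (map (\<lambda>x. q ^ x) xs) = i} \<subseteq> {xs. set xs \<subseteq> {..i} \<and> length xs \<le> m}"
  proof
    fix xs assume xs: "xs \<in> {xs. length xs \<le> m \<and> sum_list (map (\<lambda>x. q ^ x) xs) = i}"
    have "set xs \<subseteq> {..i}"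
    proof
      fix x assume "x \<in> set xs"
      hence "q ^ x \<le> i" using qpow_le_sum[of x xs] xs by simp
      thus "x \<in> {..i}" using n_le_qpow[of x] by simp
    qed
    thus "xs \<in> {xs. set xs \<subseteq> {..i} \<and> length xs \<le> m}" using xs by simp
  qed
  show "finite {xs. set xs \<subseteq> {..i} \<and> length xs \<le> m}" by (rule finite_lists_length_le) simp
qed

lemma block_id:
  fixes a :: "nat \<Rightarrow> 'c" and t pibar :: 'c
  assumes i: "i \<ge> 1"
  shows "(\<Sum>ij \<in> {ij. sum_list (map (\<lambda>x. q ^ x) (snd ij)) = i \<and> fst ij + length (snd ij) = m}.
            a (fst ij) * t ^ fst ij * of_nat ((fst ij + length (snd ij) - 1) choose length (snd ij))
             * prod_list (map (\<lambda>x. - t * pibar ^ (q ^ x) / dd q T x) (snd ij)))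
         = (- pibar) ^ i * (bcoef q T a i m * t ^ m)"
proof -
  define Y where "Y = {xs. length xs \<le> m \<and> sum_list (map (\<lambda>x. q ^ x) xs) = i}"
  define X where "X r = {xs. length xs = r \<and> sum_list (map (\<lambda>x. q ^ x) xs) = i}" for r
  define \<Psi> where "\<Psi> ij = a (fst ij) * t ^ fst ij * of_nat ((fst ij + length (snd ij) - 1) choose length (snd ij))
             * prod_list (map (\<lambda>x. - t * pibar ^ (q ^ x) / dd q T x) (snd ij))" for ij
  define D where "D xs = prod_list (map (dd q T) xs)" for xs
  define F where "F r = a (m - r) * t ^ (m - r) * of_nat ((m - 1) choose r) * (- t) ^ r * pibar ^ i * (\<Sum>xs\<in>X r. 1 / D xs)" for r
  have finY: "finite Y" unfolding Y_def by (rule finite_Y)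
  have eqS: "{ij. sum_list (map (\<lambda>x. q ^ x) (snd ij)) = i \<and> fst ij + length (snd ij) = m} = (\<lambda>xs. (m - length xs, xs)) ` Y"
  proof
    show "{ij. sum_list (map (\<lambda>x. q ^ x) (snd ij)) = i \<and> fst ij + length (snd ij) = m} \<subseteq> (\<lambda>xs. (m - length xs, xs)) ` Y"
    proof
      fix ij assume ij: "ij \<in> {ij. sum_list (map (\<lambda>x. q ^ x) (snd ij)) = i \<and> fst ij + length (snd ij) = m}"
      have "ij = (\<lambda>xs. (m - length xs, xs)) (snd ij)" using ij by (cases ij) auto
      moreover have "snd ij \<in> Y" using ij unfolding Y_def by auto
      ultimately show "ij \<in> (\<lambda>xs. (m - length xs, xs)) ` Y" by (rule image_eqI)
    qed
  qed (auto simp: Y_def)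
  have "(\<Sum>ij \<in> {ij. sum_list (map (\<lambda>x. q ^ x) (snd ij)) = i \<and> fst ij + length (snd ij) = m}. \<Psi> ij)
      = (\<Sum>xs\<in>Y. \<Psi> (m - length xs, xs))"
    unfolding eqS by (subst sum.reindex) (auto simp: inj_on_def)
  also have "\<dots> = (\<Sum>r\<in>{..m}. \<Sum>xs\<in>{xs. xs \<in> Y \<and> length xs = r}. \<Psi> (m - length xs, xs))"
    by (rule sum.group[symmetric]) (use finY in \<open>auto simp: Y_def\<close>)
  also have "\<dots> = (\<Sum>r\<in>{..m}. F r)"
  proof (rule sum.cong[OF refl])
    fix r assume r: "r \<in> {..m}"
    have XY: "{xs. xs \<in> Y \<and> length xs = r} = X r" using r unfolding X_def Y_def by auto
    have "(\<Sum>xs\<in>X r. \<Psi> (m - length xs, xs)) = (\<Sum>xs\<in>X r. a (m - r) * t ^ (m - r) * of_nat ((m - 1) choose r) * (- t) ^ r * pibar ^ i * (1 / D xs))"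
    proof (rule sum.cong[OF refl])
      fix xs assume xs: "xs \<in> X r"
      have l: "length xs = r" and sx: "sum_list (map (\<lambda>x. q ^ x) xs) = i" using xs by (auto simp: X_def)
      have mr: "m - r + r - 1 = m - 1" using r by simp
      have P: "prod_list (map (\<lambda>x. - t * pibar ^ (q ^ x) / dd q T x) xs) = (- t) ^ r * pibar ^ i / D xs"
        unfolding D_def using pl_h[of "- t" pibar xs] l sx by simp
      have "\<Psi> (m - length xs, xs) = a (m - r) * t ^ (m - r) * of_nat ((m - 1) choose r) * prod_list (map (\<lambda>x. - t * pibar ^ (q ^ x) / dd q T x) xs)"
        unfolding \<Psi>_def using l mr by (simp only: fst_conv snd_conv)
      also have "\<dots> = a (m - r) * t ^ (m - r) * of_nat ((m - 1) choose r) * (- t) ^ r * pibar ^ i * (1 / D xs)"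
        unfolding P by simp
      finally show "\<Psi> (m - length xs, xs) = a (m - r) * t ^ (m - r) * of_nat ((m - 1) choose r) * (- t) ^ r * pibar ^ i * (1 / D xs)" .
    qed
    also have "\<dots> = F r" unfolding F_def by (simp add: sum_distrib_left)
    finally show "(\<Sum>xs\<in>{xs. xs \<in> Y \<and> length xs = r}. \<Psi> (m - length xs, xs)) = F r" unfolding XY .
  qed
  also have "\<dots> = (\<Sum>r\<in>{1..m-1}. F r)"
  proof (rule sum.mono_neutral_right)
    show "finite {..m}" by simp
    show "{1..m-1} \<subseteq> {..m}" by auto
    show "\<forall>r\<in>{..m} - {1..m-1}. F r = 0"
    proof
      fix r assume r: "r \<in> {..m} - {1..m-1}"
      hence "r = 0 \<or> r = m" by auto
      thus "F r = 0"
      proof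
        assume "r = 0"
        hence "X r = {}" using i unfolding X_def by auto
        thus "F r = 0" unfolding F_def by simp
      next
        assume rm: "r = m"
        show "F r = 0"
        proof (cases "m = 0")
          case True
          hence "X r = {}" using i rm unfolding X_def by auto
          thus "F r = 0" unfolding F_def by simp
        next
          case False
          hence "(m - 1) choose r = 0" using rm by simp
          thus "F r = 0" unfolding F_def by (simp add: binomial_eq_0)
        qed
      qed
    qed
  qed
  also have "\<dots> = (\<Sum>r\<in>{1..m-1}. (- pibar) ^ i * (((- 1) ^ (i + r) * of_nat ((m - 1) choose r) * (\<Sum>xs\<in>X r. 1 / D xs) * a (m - r)) * t ^ m))"
  proof (rule sum.cong[OF refl])
    fix r assume r: "r \<in> {1..m-1}"
    have tt: "t ^ (m - r) * (- t) ^ r = (-1) ^ r * t ^ m"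
    proof -
      have "t ^ (m - r) * (- t) ^ r = (-1) ^ r * (t ^ (m - r) * t ^ r)" by (simp add: power_minus[of t r])
      also have "t ^ (m - r) * t ^ r = t ^ m"
      proof -
        have "m - r + r = m" using r by auto
        thus ?thesis by (metis power_add)
      qed
      finally show ?thesis .
    qed
    have pp: "(- pibar) ^ i * (- 1) ^ (i + r) = pibar ^ i * (-1) ^ r"
    proof -
      have "(- pibar) ^ i * (- 1) ^ (i + r) = pibar ^ i * ((-1) ^ i * (- 1) ^ i) * (-1) ^ r"
        by (simp only: power_minus[of pibar i] power_add mult_ac)
      thus ?thesis by simp
    qed
    define S where "S = (\<Sum>xs\<in>X r. 1 / D xs)"
    define C where "C = (of_nat ((m - 1) choose r) :: 'c)"
    have "F r = (a (m - r) * C * S * pibar ^ i) * (t ^ (m - r) * (- t) ^ r)"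
      unfolding F_def S_def C_def by (simp only: mult_ac)
    also have "\<dots> = (a (m - r) * C * S * pibar ^ i) * ((-1) ^ r * t ^ m)" by (simp only: tt)
    also have "\<dots> = (pibar ^ i * (-1) ^ r) * (C * S * a (m - r) * t ^ m)" by (simp only: mult_ac)
    also have "\<dots> = ((- pibar) ^ i * (- 1) ^ (i + r)) * (C * S * a (m - r) * t ^ m)" by (simp only: pp)
    also have "\<dots> = (- pibar) ^ i * (((- 1) ^ (i + r) * C * S * a (m - r)) * t ^ m)" by (simp only: mult_ac)
    finally show "F r = (- pibar) ^ i * (((- 1) ^ (i + r) * of_nat ((m - 1) choose r) * (\<Sum>xs\<in>X r. 1 / D xs) * a (m - r)) * t ^ m)"
      unfolding S_def C_def .
  qed
  also have "\<dots> = (- pibar) ^ i * ((\<Sum>r\<in>{1..m-1}. (- 1) ^ (i + r) * of_nat ((m - 1) choose r) * (\<Sum>xs\<in>X r. 1 / D xs) * a (m - r)) * t ^ m)"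
    by (simp only: sum_distrib_left[symmetric] sum_distrib_right[symmetric])
  also have "\<dots> = (- pibar) ^ i * (bcoef q T a i m * t ^ m)"
    unfolding bcoef_def X_def D_def by simp
  finally show ?thesis unfolding \<Psi>_def .
qed

lemma main_local:
  fixes a :: "nat \<Rightarrow> 'c" and f :: "'c \<Rightarrow> 'c" and pibar z :: 'c and R :: real and i :: nat
  assumes pz: "pibar \<noteq> 0"
    and hyp: "\<And>w. absi av q T w \<ge> R \<Longrightarrow> sums_av av (\<lambda>n. a n * tfun av q T pibar w ^ n) (f w)"
    and zR: "absi av q T z \<ge> R"
    and u0: "eC av q T (pibar * z) \<noteq> 0"
    and amono: "\<And>\<epsilon>. av \<epsilon> < absi av q T z \<Longrightarrow> absi av q T z \<le> absi av q T (z + \<epsilon>)"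
    and zpos: "absi av q T z > 0"
    and small: "\<And>r. r > 0 \<Longrightarrow> \<exists>x. x \<noteq> 0 \<and> av x < r"
    and i: "i \<ge> 1"
  shows "\<exists>c. local_exp av f z c \<and> sums_av av (\<lambda>m. bcoef q T a i m * tfun av q T pibar z ^ m) (c i / (- pibar) ^ i)"
proof -
  define u where "u = eC av q T (pibar * z)"
  define t where "t = 1 / u"
  have u: "u \<noteq> 0" using u0 unfolding u_def .
  have tz: "tfun av q T pibar z = t" by (simp add: tfun_def t_def u_def)
  define A where "A n = a n * t ^ n" for n
  have "nullf av (\<lambda>n. a n * tfun av q T pibar z ^ n) UNIV" by (rule sums_null[OF hyp[OF zR]])
  hence nA: "nullf av A UNIV" unfolding tz A_def .
  define h where "h x = - t * pibar ^ (q ^ x) / dd q T x" for x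
  define Cf where "Cf ij = (of_nat ((fst ij + length (snd ij) - 1) choose length (snd ij)) :: 'c)" for ij :: "nat \<times> nat list"
  define \<Psi> where "\<Psi> ij = A (fst ij) * Cf ij * prod_list (map h (snd ij))" for ij
  define gg where "gg \<epsilon> x = - t * eterm (pibar * \<epsilon>) x" for \<epsilon> x
  define \<Phi> where "\<Phi> \<epsilon> ij = A (fst ij) * Cf ij * prod_list (map (gg \<epsilon>) (snd ij))" for \<epsilon> ij
  define sq where "sq xs = sum_list (map (\<lambda>x. q ^ x) xs)" for xs :: "nat list"
  have gg_h: "gg \<epsilon> = (\<lambda>x. h x * \<epsilon> ^ (q ^ x))" for \<epsilon>
  proof
    fix x
    show "gg \<epsilon> x = h x * \<epsilon> ^ (q ^ x)"
      unfolding gg_def h_def eterm_def using dd_nz[of x] by (simp add: power_mult_distrib field_simps)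
  qed
  have \<Phi>_\<Psi>: "\<Phi> \<epsilon> ij = \<epsilon> ^ sq (snd ij) * \<Psi> ij" for \<epsilon> ij
    unfolding \<Phi>_def \<Psi>_def gg_h pl_scale sq_def by (simp only: mult_ac)
  define ra where "ra = 1 / (2 * (1 + av t) * av pibar)"
  define r0 where "r0 = min (absi av q T z) ra"
  have pib: "av pibar > 0" using pz av_pos by blast
  have ra: "ra > 0" unfolding ra_def using pib by (simp add: add_pos_nonneg)
  have r0: "r0 > 0" unfolding r0_def using ra zpos by simp
  have ggb: "av (gg \<epsilon> x) \<le> (1/2) ^ Suc x" if e: "av \<epsilon> < r0" for \<epsilon> x
  proof -
    define s where "s = av pibar * av \<epsilon>"
    have s0: "s \<ge> 0" unfolding s_def by simp
    have "av \<epsilon> < ra" using e unfolding r0_def by simp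
    hence "av pibar * av \<epsilon> < av pibar * ra" using pib by simp
    moreover have "av pibar * ra = 1 / (2 * (1 + av t))"
    proof -
      have "1 + av t > 0" by (simp add: add_pos_nonneg)
      hence "2 * (1 + av t) * av pibar \<noteq> 0" using pib pz by simp
      thus ?thesis unfolding ra_def using pib pz by simp
    qed
    ultimately have slt: "s < 1 / (2 * (1 + av t))" unfolding s_def by simp
    have d1: "1 / (2 * (1 + av t)) \<le> 1 / 2" by (simp add: divide_left_mono add_pos_nonneg)
    have s2: "s \<le> 1/2" using slt d1 by linarith
    have ts: "av t * s \<le> 1/2"
    proof -
      have "av t * s \<le> av t * (1 / (2 * (1 + av t)))" using slt by (intro mult_left_mono) auto
      also have "\<dots> = av t / (2 * (1 + av t))" by simp
      also have "\<dots> \<le> 1 / 2" by (simp add: divide_le_eq add_pos_nonneg)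
      finally show ?thesis .
    qed
    have "av (gg \<epsilon> x) = av t * s ^ (q ^ x) / av (dd q T x)"
      unfolding gg_def eterm_def s_def by (simp add: power_mult_distrib)
    also have "\<dots> \<le> av t * s ^ (q ^ x) / 1" using av_dd_ge1[of x] s0
      by (intro divide_left_mono) auto
    also have "\<dots> = av t * s ^ (q ^ x)" by simp
    also have "\<dots> \<le> av t * s ^ Suc x"
      using n_le_qpow[of x] s0 s2 by (intro mult_left_mono power_decreasing) auto
    also have "\<dots> = (av t * s) * s ^ x" by simp
    also have "\<dots> \<le> (1/2) * (1/2) ^ x" using ts s0 s2 by (intro mult_mono power_mono) auto
    also have "\<dots> = (1/2) ^ Suc x" by simp
    finally show ?thesis .
  qed
  have n\<Phi>: "nullf av (\<Phi> \<epsilon>) UNIV" if e: "av \<epsilon> < r0" for \<epsilon>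
    unfolding \<Phi>_def by (rule null_tot[OF nA ggb[OF e]]) (simp add: Cf_def av_of_nat)
  define B where "B k = {ij \<in> (UNIV :: (nat \<times> nat list) set). sq (snd ij) = k}" for k
  obtain \<epsilon>0 where e0: "\<epsilon>0 \<noteq> 0" "av \<epsilon>0 < r0" using small[OF r0] by blast
  have n\<Psi>: "nullf av \<Psi> (B k)" for k
  proof -
    have "nullf av (\<Phi> \<epsilon>0) (B k)" by (rule null_subset[OF n\<Phi>[OF e0(2)]]) simp
    hence "nullf av (\<lambda>ij. (1 / \<epsilon>0 ^ k) * \<Phi> \<epsilon>0 ij) (B k)" by (rule null_scale)
    thus ?thesis
    proof (rule null_cong)
      fix ij assume "ij \<in> B k"
      hence "sq (snd ij) = k" unfolding B_def by simp
      thus "(1 / \<epsilon>0 ^ k) * \<Phi> \<epsilon>0 ij = \<Psi> ij" using e0(1) by (simp add: \<Phi>_\<Psi>)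
    qed
  qed
  define c where "c k = hs av \<Psi> (B k)" for k
  have h\<Psi>: "hsumf av \<Psi> (B k) (c k)" for k unfolding c_def by (rule null_hsum[OF n\<Psi>])
  have loc: "sums_av av (\<lambda>k. c k * \<epsilon> ^ k) (f (z + \<epsilon>))" if e: "av \<epsilon> < r0" for \<epsilon>
  proof -
    define w where "w = eC av q T (pibar * \<epsilon>)"
    define G where "G = - t * w"
    have hG: "hsumf av (gg \<epsilon>) UNIV G"
      unfolding G_def w_def gg_def by (rule hsum_scale[OF eC_hsum])
    have nG: "nullf av (gg \<epsilon>) UNIV" unfolding gg_def by (rule null_scale[OF eterm_null])
    have avG: "av G \<le> 1/2"
    proof (rule hsum_le[OF hG])
      fix x :: nat
      have "(1/2 :: real) ^ Suc x \<le> 1/2" by (simp add: power_le_one)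
      thus "av (gg \<epsilon> x) \<le> 1/2" using ggb[OF e, of x] by linarith
    qed simp
    hence G1: "av G < 1" by simp
    define Lt where "Lt = hs av (\<Phi> \<epsilon>) UNIV"
    have hLt: "hsumf av (\<Phi> \<epsilon>) UNIV Lt" unfolding Lt_def by (rule null_hsum[OF n\<Phi>[OF e]])
    have blk1: "hs av (\<Phi> \<epsilon>) {ij \<in> UNIV. fst ij = n} = A n * (1 / (1 - G) ^ n)" for n
    proof -
      define emb where "emb xs = (n, xs)" for xs :: "nat list"
      have seq: "{ij \<in> UNIV. fst ij = n} = emb ` UNIV" unfolding emb_def by auto
      have inj: "inj_on emb UNIV" unfolding emb_def by (auto simp: inj_on_def)
      define \<phi> where "\<phi> = \<Phi> \<epsilon> \<circ> emb"
      have \<phi>: "\<phi> xs = A n * of_nat ((n + length xs - 1) choose length xs) * prod_list (map (gg \<epsilon>) xs)" for xs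
        unfolding \<phi>_def emb_def \<Phi>_def Cf_def by simp
      have n\<phi>: "nullf av \<phi> UNIV" unfolding \<phi>_def
        by (rule null_reindex_inv[OF inj]) (rule null_subset[OF n\<Phi>[OF e]], simp)
      have h\<phi>: "hsumf av \<phi> UNIV (hs av \<phi> UNIV)" by (rule null_hsum[OF n\<phi>])
      have gr2: "hsumf av (\<lambda>r. hs av \<phi> {xs \<in> UNIV. length xs = r}) UNIV (hs av \<phi> UNIV)"
        using hsum_group[OF n\<phi> h\<phi>, of length UNIV] by simp
      have blk2: "hs av \<phi> {xs \<in> UNIV. length xs = r} = A n * (of_nat ((n + r - 1) choose r) * G ^ r)" for r
      proof -
        have "hsumf av (\<lambda>xs. prod_list (map (gg \<epsilon>) xs)) {xs. length xs = r} (G ^ r)"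
          using hsum_lists[OF nG hG, of r] by simp
        hence "hsumf av (\<lambda>xs. (A n * of_nat ((n + r - 1) choose r)) * prod_list (map (gg \<epsilon>) xs)) {xs. length xs = r}
                 ((A n * of_nat ((n + r - 1) choose r)) * G ^ r)" by (rule hsum_scale)
        hence "hsumf av \<phi> {xs. length xs = r} ((A n * of_nat ((n + r - 1) choose r)) * G ^ r)"
          by (rule hsum_cong) (simp add: \<phi>)
        hence "hs av \<phi> {xs. length xs = r} = (A n * of_nat ((n + r - 1) choose r)) * G ^ r" by (rule hs_eq)
        thus ?thesis by (simp add: mult.assoc)
      qed
      have a1: "hsumf av (\<lambda>r. A n * (of_nat ((n + r - 1) choose r) * G ^ r)) UNIV (hs av \<phi> UNIV)"
        using gr2 blk2 by (rule hsum_cong)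
      have a2: "hsumf av (\<lambda>r. A n * (of_nat ((n + r - 1) choose r) * G ^ r)) UNIV (A n * (1 / (1 - G) ^ n))"
        by (rule hsum_scale[OF sums_hsum(2)[OF sums_negbin[OF G1]]])
      have "hs av \<phi> UNIV = A n * (1 / (1 - G) ^ n)" by (rule hsum_unique[OF a1 a2])
      hence "hsumf av (\<Phi> \<epsilon> \<circ> emb) UNIV (A n * (1 / (1 - G) ^ n))" using h\<phi> unfolding \<phi>_def by simp
      hence "hsumf av (\<Phi> \<epsilon>) (emb ` UNIV) (A n * (1 / (1 - G) ^ n))" by (rule hsum_reindex[OF inj])
      thus ?thesis unfolding seq by (rule hs_eq)
    qed
    have gr1: "hsumf av (\<lambda>n. A n * (1 / (1 - G) ^ n)) UNIV Lt"
      using hsum_group[OF n\<Phi>[OF e] hLt, of fst UNIV] blk1 by simp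
    have ez: "av \<epsilon> < absi av q T z" using e unfolding r0_def by simp
    have zeR: "absi av q T (z + \<epsilon>) \<ge> R" using amono[OF ez] zR by linarith
    have tfe: "tfun av q T pibar (z + \<epsilon>) = 1 / (u + w)"
      unfolding tfun_def u_def w_def by (simp add: distrib_left eC_add)
    have aG: "av (1 - G) = 1" by (rule av_one_minus[OF G1])
    have G0: "1 - G \<noteq> 0" using aG by auto
    have e1: "1 - G = (u + w) / u" unfolding G_def t_def using u by (simp add: field_simps)
    have uw: "u + w \<noteq> 0" using G0 e1 by auto
    have "a n * tfun av q T pibar (z + \<epsilon>) ^ n = A n * (1 / (1 - G) ^ n)" for n
    proof -
      have "A n * (1 / (1 - G) ^ n) = a n * ((1 / u) * (u / (u + w))) ^ n"
        unfolding A_def t_def e1 by (simp add: power_mult_distrib power_divide)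
      also have "(1 / u) * (u / (u + w)) = 1 / (u + w)" using u uw by (simp add: field_simps)
      finally show ?thesis unfolding tfe by simp
    qed
    hence "sums_av av (\<lambda>n. A n * (1 / (1 - G) ^ n)) (f (z + \<epsilon>))"
      using hyp[OF zeR] by (simp only:)
    hence "hsumf av (\<lambda>n. A n * (1 / (1 - G) ^ n)) UNIV (f (z + \<epsilon>))" by (rule sums_hsum(2))
    hence Ltf: "Lt = f (z + \<epsilon>)" using gr1 hsum_unique by blast
    have blk3: "hs av (\<Phi> \<epsilon>) {ij \<in> UNIV. sq (snd ij) = k} = \<epsilon> ^ k * c k" for k
    proof -
      have "hsumf av (\<lambda>ij. \<epsilon> ^ k * \<Psi> ij) (B k) (\<epsilon> ^ k * c k)" by (rule hsum_scale[OF h\<Psi>])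
      hence "hsumf av (\<Phi> \<epsilon>) (B k) (\<epsilon> ^ k * c k)"
        by (rule hsum_cong) (simp add: \<Phi>_\<Psi> B_def)
      thus ?thesis unfolding B_def by (rule hs_eq)
    qed
    have "hsumf av (\<lambda>k. \<epsilon> ^ k * c k) UNIV Lt"
      using hsum_group[OF n\<Phi>[OF e] hLt, of "\<lambda>ij. sq (snd ij)" UNIV] blk3 by simp
    hence "sums_av av (\<lambda>k. \<epsilon> ^ k * c k) (f (z + \<epsilon>))" unfolding Ltf by (rule hsum_to_sums)
    thus ?thesis by (simp add: mult.commute)
  qed
  have le: "local_exp av f z c" unfolding local_exp_def using r0 loc by blast
  have gr4: "hsumf av (\<lambda>m. hs av \<Psi> {ij \<in> B i. fst ij + length (snd ij) = m}) UNIV (c i)"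
    using hsum_group[OF n\<Psi>[of i] h\<Psi>[of i], of "\<lambda>ij. fst ij + length (snd ij)" UNIV] by simp
  have blk4: "hs av \<Psi> {ij \<in> B i. fst ij + length (snd ij) = m} = (- pibar) ^ i * (bcoef q T a i m * t ^ m)" for m
  proof -
    have seq: "{ij \<in> B i. fst ij + length (snd ij) = m} = {ij. sum_list (map (\<lambda>x. q ^ x) (snd ij)) = i \<and> fst ij + length (snd ij) = m}"
      unfolding B_def sq_def by auto
    have fin: "finite {ij. sum_list (map (\<lambda>x. q ^ x) (snd ij)) = i \<and> fst ij + length (snd ij) = m}"
    proof (rule finite_subset)
      show "{ij. sum_list (map (\<lambda>x. q ^ x) (snd ij)) = i \<and> fst ij + length (snd ij) = m}
          \<subseteq> {..m} \<times> {xs. length xs \<le> m \<and> sum_list (map (\<lambda>x. q ^ x) xs) = i}" by (auto simp: mem_Times_iff)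
      show "finite ({..m} \<times> {xs. length xs \<le> m \<and> sum_list (map (\<lambda>x. q ^ x) xs) = i})"
        using finite_Y by simp
    qed
    have "hs av \<Psi> {ij \<in> B i. fst ij + length (snd ij) = m} = sum \<Psi> {ij. sum_list (map (\<lambda>x. q ^ x) (snd ij)) = i \<and> fst ij + length (snd ij) = m}"
      unfolding seq by (rule hs_finite[OF fin])
    also have "\<dots> = (- pibar) ^ i * (bcoef q T a i m * t ^ m)"
      unfolding \<Psi>_def A_def Cf_def h_def by (rule block_id[OF i])
    finally show ?thesis .
  qed
  have "hsumf av (\<lambda>m. (- pibar) ^ i * (bcoef q T a i m * t ^ m)) UNIV (c i)"
    using gr4 blk4 by simp
  hence "hsumf av (\<lambda>m. (1 / (- pibar) ^ i) * ((- pibar) ^ i * (bcoef q T a i m * t ^ m))) UNIV ((1 / (- pibar) ^ i) * c i)"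
    by (rule hsum_scale)
  moreover have "(1 / (- pibar) ^ i) * ((- pibar) ^ i * (bcoef q T a i m * t ^ m)) = bcoef q T a i m * t ^ m" for m
    using pz by simp
  ultimately have "hsumf av (\<lambda>m. bcoef q T a i m * t ^ m) UNIV (c i / (- pibar) ^ i)" by simp
  hence "sums_av av (\<lambda>m. bcoef q T a i m * tfun av q T pibar z ^ m) (c i / (- pibar) ^ i)"
    unfolding tz by (rule hsum_to_sums)
  thus ?thesis using le by blast
qed

end

lemma frob_prime:
  fixes x y :: "'c::field"
  assumes p: "prime p" and p0: "of_nat p = (0::'c)"
  shows "(x + y) ^ p = x ^ p + y ^ p"
proof -
  have p1: "p > 0" using p prime_gt_0_nat by blast
  define g where "g k = of_nat (p choose k) * x ^ k * y ^ (p - k)" for k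
  have "(x + y) ^ p = (\<Sum>k\<le>p. g k)" unfolding g_def by (rule binomial_ring)
  also have "\<dots> = (\<Sum>k\<in>{0, p}. g k)"
  proof (rule sum.mono_neutral_right)
    show "finite {..p}" by simp
    show "{0, p} \<subseteq> {..p}" by auto
    show "\<forall>k\<in>{..p} - {0, p}. g k = 0"
    proof
      fix k assume k: "k \<in> {..p} - {0, p}"
      hence "k < p" "k \<noteq> 0" by auto
      hence "p dvd (p choose k)" using dvd_choose_prime p p1 by auto
      then obtain d where "p choose k = p * d" by (auto elim: dvdE)
      hence "(of_nat (p choose k) :: 'c) = 0" using p0 by simp
      thus "g k = 0" unfolding g_def by simp
    qed
  qed
  also have "\<dots> = y ^ p + x ^ p" using p1 unfolding g_def by simp
  finally show ?thesis by (simp add: add.commute)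
qed

lemma frob_prime_pow:
  fixes x y :: "'c::field"
  assumes p: "prime p" and p0: "of_nat p = (0::'c)"
  shows "(x + y) ^ (p ^ m) = x ^ (p ^ m) + y ^ (p ^ m)"
proof (induct m arbitrary: x y)
  case (Suc m)
  have qs: "p ^ Suc m = p ^ m * p" by simp
  have "(x + y) ^ (p ^ Suc m) = ((x + y) ^ (p ^ m)) ^ p" unfolding qs by (rule power_mult)
  also have "\<dots> = (x ^ (p ^ m)) ^ p + (y ^ (p ^ m)) ^ p" using Suc frob_prime[OF p p0, of "x ^ (p ^ m)" "y ^ (p ^ m)"] by simp
  also have "\<dots> = x ^ (p ^ Suc m) + y ^ (p ^ Suc m)" unfolding qs by (simp only: power_mult)
  finally show ?case .
qed simp

lemma zero_Kinf: assumes "naf av" "q > 0" shows "(0::'c::field) \<in> Kinf av q T"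
proof -
  interpret naf av by fact
  have "sums_av av (\<lambda>k. (0::'c) * T ^ 0 / T ^ k) 0" unfolding sums_av_def conv_av_def by simp
  moreover have "\<forall>k. (0::'c) \<in> Fq q" using assms(2) by (simp add: Fq_def)
  ultimately show ?thesis unfolding Kinf_def mem_Collect_eq by (intro exI[of _ 0] exI[of _ "\<lambda>k. 0"]) simp
qed

lemma Aring_Kinf: assumes "naf av" "q > 0" "av T > 1" shows "Aring q T \<subseteq> Kinf av q (T::'c::field)"
proof
  interpret naf av by fact
  have T0: "T \<noteq> 0" using assms(3) by auto
  fix b assume "b \<in> Aring q T"
  then obtain n c where b: "b = (\<Sum>k<n. c k * T ^ k)" and c: "\<forall>k. c k \<in> Fq q" unfolding Aring_def by blast
  define d where "d j = (if 1 \<le> j \<and> j \<le> n then c (n - j) else 0)" for j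
  have dF: "\<forall>j. d j \<in> Fq q" using c assms(2) by (simp add: d_def Fq_def)
  define g where "g j = d j * T ^ n / T ^ j" for j
  have "hsumf av g UNIV (sum g {1..n})" by (rule hsum_fin_supp) (auto simp: g_def d_def)
  hence sg: "sums_av av g (sum g {1..n})" by (rule hsum_to_sums)
  have "sum g {1..n} = (\<Sum>k<n. g (n - k))"
  proof -
    have im: "(\<lambda>k. n - k) ` {..<n} = {1..n}"
    proof
      show "{1..n} \<subseteq> (\<lambda>k. n - k) ` {..<n}"
      proof
        fix j assume j: "j \<in> {1..n}"
        hence "j = n - (n - j)" "n - j \<in> {..<n}" by auto
        thus "j \<in> (\<lambda>k. n - k) ` {..<n}" by (rule image_eqI)
      qed
    qed auto
    have "inj_on (\<lambda>k. n - k) {..<n}" by (auto simp: inj_on_def)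
    hence "sum g ((\<lambda>k. n - k) ` {..<n}) = (\<Sum>k<n. g (n - k))" by (simp add: sum.reindex)
    thus ?thesis using im by simp
  qed
  also have "\<dots> = b" unfolding b
  proof (rule sum.cong[OF refl])
    fix k assume k: "k \<in> {..<n}"
    hence "n - (n - k) = k" "1 \<le> n - k" "n - k \<le> n" by auto
    moreover have "T ^ n = T ^ k * T ^ (n - k)" using k by (simp add: power_add[symmetric])
    ultimately show "g (n - k) = c k * T ^ k" unfolding g_def d_def using T0 by simp
  qed
  finally have "sums_av av (\<lambda>j. d j * T ^ n / T ^ j) b" using sg unfolding g_def by simp
  thus "b \<in> Kinf av q T" unfolding Kinf_def mem_Collect_eq using dF by (intro exI[of _ n] exI[of _ d]) simp
qed

lemma absi_Kinf: assumes "naf av" "z \<in> Kinf av q T" shows "absi av q T z \<le> 0"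
proof -
  interpret naf av by fact
  have bdd: "bdd_below {av (z - x) | x. x \<in> Kinf av q T}" by (rule bdd_belowI[of _ 0]) auto
  have "0 \<in> {av (z - x) | x. x \<in> Kinf av q T}" using assms(2) by force
  hence "Inf {av (z - x) | x. x \<in> Kinf av q T} \<le> 0" using bdd by (rule cInf_lower)
  thus ?thesis unfolding absi_def .
qed

lemma absi_mono: assumes "naf av" "q > 0" "av \<epsilon> < absi av q T z"
  shows "absi av q T z \<le> absi av q T (z + \<epsilon>)"
proof -
  interpret naf av by fact
  have bdd: "bdd_below {av (z - x) | x. x \<in> Kinf av q T}" by (rule bdd_belowI[of _ 0]) auto
  have ne: "{av (z + \<epsilon> - x) | x. x \<in> Kinf av q T} \<noteq> {}" using zero_Kinf[OF assms(1,2)] by blast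
  have "absi av q T z \<le> Inf {av (z + \<epsilon> - x) | x. x \<in> Kinf av q T}"
  proof (rule cInf_greatest[OF ne])
    fix y assume "y \<in> {av (z + \<epsilon> - x) | x. x \<in> Kinf av q T}"
    then obtain x where x: "x \<in> Kinf av q T" "y = av (z + \<epsilon> - x)" by blast
    have "absi av q T z \<le> av (z - x)" unfolding absi_def using x(1) bdd by (intro cInf_lower) auto
    hence "av \<epsilon> < av (z - x)" using assms(3) by linarith
    hence "av ((z - x) + \<epsilon>) = av (z - x)" by (rule av_strict)
    thus "absi av q T z \<le> y" using x(2) \<open>absi av q T z \<le> av (z - x)\<close> by (simp add: algebra_simps)
  qed
  thus ?thesis unfolding absi_def[of av q T "z + \<epsilon>"] by simp
qed

lemma small_elems: assumes "naf av" "av T > 1" "r > 0" shows "\<exists>x::'c::field. x \<noteq> 0 \<and> av x < r"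
proof -
  interpret naf av by fact
  obtain n where n: "1 / r < av T ^ n" using real_arch_pow[OF assms(2)] by blast
  have T0: "T \<noteq> 0" using assms(2) by auto
  have pos: "av T ^ n > 0" using assms(2) by simp
  have "av (inverse (T ^ n)) = inverse (av T ^ n)" by simp
  also have "\<dots> < r" using n pos assms(3) by (simp add: field_simps)
  finally show ?thesis using T0 by (intro exI[of _ "inverse (T ^ n)"]) simp
qed


theorem lemma7:
  fixes p q :: nat and av :: "'c::field \<Rightarrow> real" and T pibar :: 'c
    and f :: "'c \<Rightarrow> 'c" and a :: "nat \<Rightarrow> 'c" and i :: nat
  assumes "setting p q av T"
    and "\<forall>z. eC av q T z = 0 \<longleftrightarrow> (\<exists>b\<in>Aring q T. z = pibar * b)"
    and "in_O av q T pibar f a"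
    and "i \<ge> 1"
  shows "\<exists>R. \<forall>z. absi av q T z \<ge> R \<longrightarrow>
           sums_av av (\<lambda>n. bcoef q T a i n * tfun av q T pibar z ^ n) (Dop av pibar f i z)"
proof -
  have pr: "prime p" and qm: "\<exists>m\<ge>1. q = p ^ m" and p0: "of_nat p = (0::'c)"
    and na: "nonarch_abs av" and cp: "complete_av av" and T1: "av T > 1"
    using assms(1) unfolding setting_def by auto
  obtain m where m: "m \<ge> 1" "q = p ^ m" using qm by blast
  have p2: "p \<ge> 2" using pr prime_ge_2_nat by blast
  have "p ^ 1 \<le> p ^ m" using m(1) p2 by (intro power_increasing) auto
  hence q2: "q \<ge> 2" using m(2) p2 by simp
  have q0: "q > 0" using q2 by simp
  have frob: "\<And>x y::'c. (x + y) ^ q = x ^ q + y ^ q" using frob_prime_pow[OF pr p0] m(2) by simp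
  have nf: "naf av" using na cp by (simp add: naf_def)
  interpret C: carl av q T using nf q2 T1 frob by (simp add: carl_def carl_axioms_def)
  show ?thesis
  proof (cases "pibar = 0")
    case True
    have A0: "(0::'c) \<in> Aring q T"
      unfolding Aring_def mem_Collect_eq using q0
      by (intro exI[of _ 0] exI[of _ "\<lambda>k. (0::'c)"]) (simp add: Fq_def)
    have "eC av q T 0 = 0" using assms(2) A0 True by auto
    hence tf: "tfun av q T pibar z = 0" for z by (simp add: tfun_def True)
    have D0: "Dop av pibar f i z = 0" for z using assms(4) True by (simp add: Dop_def)
    have terms: "bcoef q T a i n * tfun av q T pibar z ^ n = 0" for n z
    proof (cases n)
      case 0 thus ?thesis by (simp add: bcoef_def)
    next
      case (Suc k) thus ?thesis by (simp add: tf)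
    qed
    show ?thesis
    proof (intro exI[of _ 0] allI impI)
      fix z :: 'c
      show "sums_av av (\<lambda>n. bcoef q T a i n * tfun av q T pibar z ^ n) (Dop av pibar f i z)"
        unfolding terms D0 sums_av_def conv_av_def by simp
    qed
  next
    case False
    obtain R where R: "\<forall>z. absi av q T z \<ge> R \<longrightarrow> sums_av av (\<lambda>n. a n * tfun av q T pibar z ^ n) (f z)"
      using assms(3) unfolding in_O_def by blast
    show ?thesis
    proof (intro exI[of _ "max R 1"] allI impI)
      fix z :: 'c assume z: "absi av q T z \<ge> max R 1"
      have zR: "absi av q T z \<ge> R" and zpos: "absi av q T z > 0" using z by auto
      have zK: "z \<notin> Kinf av q T" using absi_Kinf[OF nf, of z q T] zpos by auto
      have u0: "eC av q T (pibar * z) \<noteq> 0"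
      proof
        assume "eC av q T (pibar * z) = 0"
        then obtain b where b: "b \<in> Aring q T" "pibar * z = pibar * b" using assms(2) by blast
        hence "z = b" using False by simp
        hence "z \<in> Kinf av q T" using Aring_Kinf[OF nf q0 T1] b(1) by blast
        thus False using zK by simp
      qed
      have hyp: "\<And>w. absi av q T w \<ge> R \<Longrightarrow> sums_av av (\<lambda>n. a n * tfun av q T pibar w ^ n) (f w)"
        using R by blast
      have amono: "\<And>\<epsilon>. av \<epsilon> < absi av q T z \<Longrightarrow> absi av q T z \<le> absi av q T (z + \<epsilon>)"
        by (rule absi_mono[OF nf q0])
      have small: "\<And>r. r > 0 \<Longrightarrow> \<exists>x. x \<noteq> 0 \<and> av x < r" by (rule small_elems[OF nf T1])
      obtain c where c: "local_exp av f z c"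
        "sums_av av (\<lambda>m. bcoef q T a i m * tfun av q T pibar z ^ m) (c i / (- pibar) ^ i)"
        using C.main_local[OF False hyp zR u0 amono zpos small assms(4)] by blast
      have "(THE c. local_exp av f z c) = c"
      proof (rule the_equality[of "\<lambda>c. local_exp av f z c", OF c(1)])
        fix d assume "local_exp av f z d"
        thus "d = c" using C.local_exp_unique[OF small c(1)] by simp
      qed
      hence "Dop av pibar f i z = c i / (- pibar) ^ i" unfolding Dop_def Dcal_def by simp
      thus "sums_av av (\<lambda>n. bcoef q T a i n * tfun av q T pibar z ^ n) (Dop av pibar f i z)"
        using c(2) by simp
    qed
  qed
qed

end
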